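(* For every $\lambda\in\mathcal P_\epsilon(N)$, $$z(\lambda)=\max|\mathbf i|,$$ the maximum taken over all admissible sequences $\mathbf i$ for $\lambda$ (here $|\mathbf i|$ is the length of $\mathbf i$).
   Context: $\mathcal P_\epsilon(N)$ ($\epsilon=\pm1$) is the set of partitions $\lambda=(\lambda_1\ge\dots\ge\lambda_n\ge1)$ of $N$ in which every part $m$ with $\epsilon(-1)^m=1$ occurs with even multiplicity; conventions $\lambda_0=0$, $\lambda_i=0$ for $i>n$. $s(\lambda)=\sum_{i=1}^n\lfloor(\lambda_i-\lambda_{i+1})/2\rfloor$. A 2-step of $\lambda$ is a pair $(i,i+1)$, $1\le i<n$, with $\epsilon(-1)^{\lambda_i}=\epsilon(-1)^{\lambda_{i+1}}=-1$, $\lambda_{i-1}\ne\lambda_i$, $\lambda_{i+1}\ne\lambda_{i+2}$; $\Delta(\lambda)$ is the set of 2-steps. A 2-step $(i,i+1)$ is bad if ($i>1$ and $\lambda_{i-1}-\lambda_i$ is even) or $\lambda_{i+1}-\lambda_{i+2}$ is even, good otherwise; $\Delta_{\rm bad}(\lambda)$ is the set of bad 2-steps. A 2-cluster is a sequence $i_1<\dots<i_k$ with $k\ge2$, $(i_j,i_j+1)\in\Delta(\lambda)$ for all $j$ and $i_{j+1}=i_j+2$; it has a bad boundary if ($i_1>1$ and $\lambda_{i_1-1}-\lambda_{i_1}$ is a positive even integer) or $\lambda_{i_k+1}-\lambda_{i_k+2}$ is a positive even integer; a good 2-cluster is one without bad boundary, and $\Sigma(\lambda)$ is the set of good 2-clusters.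 Define $z(\lambda)=s(\lambda)+|\Delta(\lambda)|-|\Delta_{\rm bad}(\lambda)|+|\Sigma(\lambda)|$. KS algorithm: for $1\le i\le n$, Case 1 occurs at $i$ if $\lambda_i\ge\lambda_{i+1}+2$, and then $\lambda^{(i)}=(\lambda_1-2,\dots,\lambda_i-2,\lambda_{i+1},\dots,\lambda_n)$; Case 2 occurs at $i$ if $(i,i+1)\in\Delta(\lambda)$ and $\lambda_i=\lambda_{i+1}$, and then $\lambda^{(i)}=(\lambda_1-2,\dots,\lambda_{i-1}-2,\lambda_i-1,\lambda_{i+1}-1,\lambda_{i+2},\dots,\lambda_n)$; zero parts discarded, $\lambda^{(i)}\in\mathcal P_\epsilon(N-2i)$. A sequence $(i_1,\dots,i_l)$ is admissible for $\lambda$ if for each $k$ Case 1 or Case 2 occurs at $i_k$ for $\lambda^{(i_1,\dots,i_{k-1})}$, where $\lambda^\emptyset=\lambda$ and $\lambda^{(i_1,\dots,i_k)}=(\lambda^{(i_1,\dots,i_{k-1})})^{(i_k)}$. *)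

theory Defs
  imports Main
begin

text \<open>A partition is a list of its parts in weakly decreasing order, all parts positive.
  Parts are indexed from 1; lam xs 0 = 0 and lam xs i = 0 for i > length xs.\<close>

definition lam :: "nat list \<Rightarrow> nat \<Rightarrow> nat" where
  "lam xs i = (if 1 \<le> i \<and> i \<le> length xs then xs ! (i - 1) else 0)"

definition P_eps :: "int \<Rightarrow> nat \<Rightarrow> nat list set" where
  "P_eps eps N = {xs. sorted_wrt (\<ge>) xs \<and> (\<forall>x\<in>set xs. 0 < x) \<and> sum_list xs = N \<and>
      (\<forall>m\<in>set xs. eps * (-1) ^ m = 1 \<longrightarrow> even (count_list xs m))}"

definition s_fun :: "nat list \<Rightarrow> int" where
  "s_fun xs = (\<Sum>i=1..length xs. (int (lam xs i) - int (lam xs (i+1))) div 2)"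

definition two_steps :: "int \<Rightarrow> nat list \<Rightarrow> (nat \<times> nat) set" where
  "two_steps eps xs = {(i, i+1) | i. 1 \<le> i \<and> i < length xs \<and>
      eps * (-1) ^ lam xs i = -1 \<and> eps * (-1) ^ lam xs (i+1) = -1 \<and>
      lam xs (i-1) \<noteq> lam xs i \<and> lam xs (i+1) \<noteq> lam xs (i+2)}"

definition bad_two_steps :: "int \<Rightarrow> nat list \<Rightarrow> (nat \<times> nat) set" where
  "bad_two_steps eps xs = {(i, j) \<in> two_steps eps xs.
      (i > 1 \<and> even (int (lam xs (i-1)) - int (lam xs i))) \<or>
      even (int (lam xs (i+1)) - int (lam xs (i+2)))}"

definition two_cluster :: "int \<Rightarrow> nat list \<Rightarrow> nat list \<Rightarrow> bool" where
  "two_cluster eps xs cs \<longleftrightarrow> 2 \<le> length cs \<and>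
      (\<forall>j<length cs. (cs ! j, cs ! j + 1) \<in> two_steps eps xs) \<and>
      (\<forall>j. j + 1 < length cs \<longrightarrow> cs ! (j+1) = cs ! j + 2)"

definition pos_even :: "int \<Rightarrow> bool" where
  "pos_even d \<longleftrightarrow> 0 < d \<and> even d"

definition bad_boundary :: "nat list \<Rightarrow> nat list \<Rightarrow> bool" where
  "bad_boundary xs cs \<longleftrightarrow>
     (hd cs > 1 \<and> pos_even (int (lam xs (hd cs - 1)) - int (lam xs (hd cs)))) \<or>
     pos_even (int (lam xs (last cs + 1)) - int (lam xs (last cs + 2)))"

definition good_clusters :: "int \<Rightarrow> nat list \<Rightarrow> nat list set" where
  "good_clusters eps xs = {cs. two_cluster eps xs cs \<and> \<not> bad_boundary xs cs}"

definition z_fun :: "int \<Rightarrow> nat list \<Rightarrow> int" where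
  "z_fun eps xs = s_fun xs + int (card (two_steps eps xs)) - int (card (bad_two_steps eps xs))
                  + int (card (good_clusters eps xs))"

definition case1 :: "nat list \<Rightarrow> nat \<Rightarrow> bool" where
  "case1 xs i \<longleftrightarrow> 1 \<le> i \<and> i \<le> length xs \<and> lam xs (i+1) + 2 \<le> lam xs i"

definition case2 :: "int \<Rightarrow> nat list \<Rightarrow> nat \<Rightarrow> bool" where
  "case2 eps xs i \<longleftrightarrow> 1 \<le> i \<and> i \<le> length xs \<and>
      (i, i+1) \<in> two_steps eps xs \<and> lam xs i = lam xs (i+1)"

definition ks_step :: "int \<Rightarrow> nat list \<Rightarrow> nat \<Rightarrow> nat list" where
  "ks_step eps xs i =
     (if case1 xs i then
        filter (\<lambda>x. 0 < x) (map (\<lambda>j. if j \<le> i then lam xs j - 2 else lam xs j) [1..<length xs + 1])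
      else if case2 eps xs i then
        filter (\<lambda>x. 0 < x) (map (\<lambda>j. if j < i then lam xs j - 2
                                   else if j = i \<or> j = i + 1 then lam xs j - 1
                                   else lam xs j) [1..<length xs + 1])
      else xs)"

fun admissible :: "int \<Rightarrow> nat list \<Rightarrow> nat list \<Rightarrow> bool" where
  "admissible eps xs [] = True"
| "admissible eps xs (i # is) =
     ((case1 xs i \<or> case2 eps xs i) \<and> admissible eps (ks_step eps xs i) is)"

end

theory Submission
  imports Defs
begin


definition fr :: "int \<Rightarrow> nat \<Rightarrow> bool" where
  "fr e m \<longleftrightarrow> e * (-1) ^ m = -1"

lemma fr_same_parity: "fr e a \<Longrightarrow> fr e b \<Longrightarrow> even (int a - int b)"
proof -
  assume a: "fr e a" and b: "fr e b"
  have "even a = even b"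
  proof (rule ccontr)
    assume "even a \<noteq> even b"
    then have "((-1::int)^a = 1 \<and> (-1::int)^b = -1) \<or> ((-1::int)^a = -1 \<and> (-1::int)^b = 1)"
      by (cases "even a") auto
    with a b show False unfolding fr_def by auto
  qed
  then show ?thesis by auto
qed

lemma fr_minus2: "2 \<le> m \<Longrightarrow> fr e (m - 2) = fr e m"
proof -
  assume "2 \<le> m"
  then obtain k where "m = k + 2" by (metis add.commute le_Suc_ex)
  then show ?thesis unfolding fr_def by (simp add: power_add)
qed

lemma fr_minus1: "1 \<le> m \<Longrightarrow> fr e m \<Longrightarrow> \<not> fr e (m - 1)"
proof -
  assume "1 \<le> m" "fr e m"
  then obtain k where k: "m = Suc k" by (metis Suc_le_D One_nat_def)
  with \<open>fr e m\<close> show ?thesis unfolding fr_def by simp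
qed

definition DD :: "int \<Rightarrow> (nat \<Rightarrow> nat) \<Rightarrow> nat \<Rightarrow> bool" where
  "DD e L i \<longleftrightarrow> 1 \<le> i \<and> 0 < L (i+1) \<and> fr e (L i) \<and> fr e (L (i+1)) \<and>
     L (i-1) \<noteq> L i \<and> L (i+1) \<noteq> L (i+2)"

definition dd :: "(nat \<Rightarrow> nat) \<Rightarrow> nat \<Rightarrow> int" where
  "dd L k = int (L k) - int (L (k+1))"

fun lok :: "int \<Rightarrow> (nat \<Rightarrow> nat) \<Rightarrow> nat \<Rightarrow> bool" where
  "lok e L 0 = False"
| "lok e L (Suc 0) = DD e L 1"
| "lok e L (Suc (Suc k)) = (DD e L (k+2) \<and> (odd (dd L (k+1)) \<or> lok e L k))"

definition gg :: "int \<Rightarrow> (nat \<Rightarrow> nat) \<Rightarrow> nat \<Rightarrow> bool" where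
  "gg e L a \<longleftrightarrow> lok e L a \<and> odd (dd L (a+1))"

definition chain :: "int \<Rightarrow> (nat \<Rightarrow> nat) \<Rightarrow> nat \<Rightarrow> nat \<Rightarrow> bool" where
  "chain e L b a \<longleftrightarrow> b \<le> a \<and> even (a - b) \<and> (\<forall>c. b \<le> c \<and> c \<le> a \<and> even (a - c) \<longrightarrow> DD e L c)"

definition zz :: "int \<Rightarrow> (nat \<Rightarrow> nat) \<Rightarrow> nat \<Rightarrow> int" where
  "zz e L M = (\<Sum>j=1..M. dd L j div 2) + (\<Sum>a=1..M. if gg e L a then 1 else 0)"

definition part :: "(nat \<Rightarrow> nat) \<Rightarrow> nat \<Rightarrow> bool" where
  "part L M \<longleftrightarrow> L 0 = 0 \<and> (\<forall>j k. 1 \<le> j \<and> j \<le> k \<longrightarrow> L k \<le> L j) \<and> (\<forall>j>M. L j = 0)"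

definition c1 :: "(nat \<Rightarrow> nat) \<Rightarrow> nat \<Rightarrow> bool" where
  "c1 L i \<longleftrightarrow> 1 \<le> i \<and> L (i+1) + 2 \<le> L i"

definition c2 :: "int \<Rightarrow> (nat \<Rightarrow> nat) \<Rightarrow> nat \<Rightarrow> bool" where
  "c2 e L i \<longleftrightarrow> DD e L i \<and> L i = L (i+1)"

definition st1 :: "(nat \<Rightarrow> nat) \<Rightarrow> nat \<Rightarrow> nat \<Rightarrow> nat" where
  "st1 L i = (\<lambda>j. if j \<le> i then L j - 2 else L j)"

definition st2 :: "(nat \<Rightarrow> nat) \<Rightarrow> nat \<Rightarrow> nat \<Rightarrow> nat" where
  "st2 L i = (\<lambda>j. if j < i then L j - 2 else if j = i \<or> j = i + 1 then L j - 1 else L j)"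

lemma lok_DD: "lok e L a \<Longrightarrow> DD e L a"
  by (induction e L a rule: lok.induct) auto

lemma DD_ge1: "DD e L a \<Longrightarrow> 1 \<le> a"
  by (simp add: DD_def)

lemma lok_unfold: "1 \<le> a \<Longrightarrow> lok e L a = (DD e L a \<and> (a = 1 \<or> odd (dd L (a-1)) \<or> lok e L (a-2)))"
proof -
  assume "1 \<le> a"
  then consider "a = 1" | k where "a = Suc (Suc k)"
    by (metis One_nat_def Suc_le_D not0_implies_Suc)
  then show ?thesis
  proof cases
    case 1 then show ?thesis by simp
  next
    case 2 then show ?thesis by (auto simp: add.commute)
  qed
qed

lemma even_gap: "DD e L j \<Longrightarrow> DD e L (j+2) \<Longrightarrow> even (dd L (j+1))"
  unfolding DD_def dd_def using fr_same_parity[of e "L (j+1)" "L (j+2)"]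
  by (simp add: add.commute numeral_2_eq_2)

lemma even_gap_nat: "(b::nat) \<le> a \<Longrightarrow> even (a - b) \<Longrightarrow> a \<noteq> b \<Longrightarrow> b + 2 \<le> a"
proof -
  assume h: "b \<le> a" "even (a - b)" "a \<noteq> b"
  from h(2) obtain k where k: "a - b = 2 * k" by (elim evenE)
  have "a - b \<noteq> 0" using h(1,3) by simp
  with k have "k \<noteq> 0" by auto
  with k h(1) show ?thesis by linarith
qed

lemma chain_lok: "chain e L b a \<Longrightarrow> lok e L a = lok e L b"
proof (induction a arbitrary: b rule: less_induct)
  case (less a)
  show ?case
  proof (cases "a = b")
    case True then show ?thesis by simp
  next
    case False
    with less.prems have ab: "b + 2 \<le> a" unfolding chain_def using even_gap_nat by blast
    have ch: "chain e L b (a-2)" using less.prems ab unfolding chain_def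
    proof (intro conjI allI impI)
      fix c assume "b \<le> a \<and> even (a - b) \<and> (\<forall>c. b \<le> c \<and> c \<le> a \<and> even (a - c) \<longrightarrow> DD e L c)"
        "b \<le> c \<and> c \<le> a - 2 \<and> even (a - 2 - c)"
      then show "DD e L c"
      proof -
        assume h1: "b \<le> a \<and> even (a - b) \<and> (\<forall>c. b \<le> c \<and> c \<le> a \<and> even (a - c) \<longrightarrow> DD e L c)"
          and h2: "b \<le> c \<and> c \<le> a - 2 \<and> even (a - 2 - c)"
        have "a - c = (a - 2 - c) + 2" using h2 ab by linarith
        then have "even (a - c)" using h2 by simp
        then show ?thesis using h1 h2 by auto
      qed
    qed (use ab in \<open>auto elim!: evenE\<close>)+
    have d1: "DD e L (a-2)" "DD e L a" using less.prems ab unfolding chain_def by auto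
    have "a - 2 + 1 = a - 1" "a - 2 + 2 = a" using ab by auto
    then have ev: "even (dd L (a-1))" using even_gap[of e L "a-2"] d1 by simp
    have "lok e L a = lok e L (a-2)"
      using lok_unfold[of a e L] ab ev \<open>DD e L a\<close> by auto
    also have "\<dots> = lok e L b" using less.IH[of "a-2" b] ch ab by auto
    finally show ?thesis .
  qed
qed

lemma chain_single: "DD e L a \<Longrightarrow> chain e L a a"
  unfolding chain_def by auto

lemma chain_ext: "chain e L c k \<Longrightarrow> DD e L (k+2) \<Longrightarrow> chain e L c (k+2)"
  unfolding chain_def
proof (intro conjI allI impI)
  fix x assume h: "c \<le> k \<and> even (k - c) \<and> (\<forall>x. c \<le> x \<and> x \<le> k \<and> even (k - x) \<longrightarrow> DD e L x)"
    "DD e L (k + 2)" "c \<le> x \<and> x \<le> k + 2 \<and> even (k + 2 - x)"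
  show "DD e L x"
  proof (cases "x = k + 2")
    case True then show ?thesis using h by simp
  next
    case False
    with h(3) have "x \<le> k" by (cases "x = k+1") auto
    moreover have "k + 2 - x = (k - x) + 2" using \<open>x \<le> k\<close> by simp
    ultimately show ?thesis using h by auto
  qed
next
  assume "c \<le> k \<and> even (k - c) \<and> (\<forall>x. c \<le> x \<and> x \<le> k \<and> even (k - x) \<longrightarrow> DD e L x)"
  then show "c \<le> k + 2" "even (k + 2 - c)" by (auto simp: Nat.add_diff_assoc2[symmetric])
qed

lemma chain_DD: "chain e L c a \<Longrightarrow> DD e L c \<and> DD e L a"
  unfolding chain_def by auto

lemma lok_transfer:
  "lok e L a \<Longrightarrow> lok e L' a \<or> (\<exists>c. chain e L c a \<and> (\<not> DD e L' c \<or> (2 \<le> c \<and> odd (dd L (c-1)) \<and> even (dd L' (c-1)))))"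
proof (induction e L a rule: lok.induct)
  case (1 e L) then show ?case by simp
next
  case (2 e L)
  then show ?case using chain_single[of e L 1] by auto
next
  case (3 e L k)
  have D: "DD e L (k+2)" using "3.prems" by simp
  show ?case
  proof (cases "DD e L' (k+2)")
    case False
    then show ?thesis using chain_single[OF D] by (auto simp: add.commute)
  next
    case D': True
    from "3.prems" consider "odd (dd L (k+1))" | "lok e L k" by auto
    then show ?thesis
    proof cases
      case 1
      show ?thesis
      proof (cases "odd (dd L' (k+1))")
        case True then show ?thesis using D' by (simp add: add.commute)
      next
        case False
        then have "chain e L (k+2) (Suc (Suc k)) \<and> (2 \<le> k+2 \<and> odd (dd L (k+2-1)) \<and> even (dd L' (k+2-1)))"
          using chain_single[OF D] 1 by (simp add: add.commute)
        then show ?thesis by blast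
      qed
    next
      case 2
      from "3.IH"[OF 2] show ?thesis
      proof
        assume "lok e L' k" then show ?thesis using D' by (simp add: add.commute)
      next
        assume "\<exists>c. chain e L c k \<and> (\<not> DD e L' c \<or> 2 \<le> c \<and> odd (dd L (c - 1)) \<and> even (dd L' (c - 1)))"
        then obtain c where "chain e L c k" "\<not> DD e L' c \<or> 2 \<le> c \<and> odd (dd L (c - 1)) \<and> even (dd L' (c - 1))" by blast
        then have "chain e L c (Suc (Suc k))" using chain_ext[of e L c k] D by (simp add: add.commute)
        then show ?thesis using \<open>\<not> DD e L' c \<or> _\<close> by blast
      qed
    qed
  qed
qed

lemma chain_lok_start: "lok e L a \<Longrightarrow> \<exists>b. chain e L b a \<and> (b = 1 \<or> (2 \<le> b \<and> odd (dd L (b-1))))"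
proof (induction e L a rule: lok.induct)
  case (1 e L) then show ?case by simp
next
  case (2 e L) then show ?case using chain_single[of e L 1] by auto
next
  case (3 e L k)
  have D: "DD e L (k+2)" using "3.prems" by simp
  from "3.prems" consider "odd (dd L (k+1))" | "lok e L k" by auto
  then show ?case
  proof cases
    case 1
    then show ?thesis using chain_single[OF D] by (intro exI[of _ "k+2"]) (simp add: add.commute)
  next
    case 2
    then obtain b where "chain e L b k" "b = 1 \<or> (2 \<le> b \<and> odd (dd L (b-1)))" using "3.IH" by blast
    then show ?thesis using chain_ext[of e L b k] D by (auto simp: add.commute)
  qed
qed

lemma chain_to_lok: "chain e L b a \<Longrightarrow> (b = 1 \<or> (2 \<le> b \<and> odd (dd L (b-1)))) \<Longrightarrow> lok e L a"
proof -
  assume ch: "chain e L b a" and h: "b = 1 \<or> (2 \<le> b \<and> odd (dd L (b-1)))"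
  have "DD e L b" using chain_DD[OF ch] by simp
  then have "lok e L b" using h lok_unfold[of b e L] DD_ge1 by auto
  then show ?thesis using chain_lok[OF ch] by simp
qed

lemma part_anti: "part L M \<Longrightarrow> 1 \<le> j \<Longrightarrow> j \<le> k \<Longrightarrow> L k \<le> L j"
  unfolding part_def by blast

lemma part_zero: "part L M \<Longrightarrow> M < j \<Longrightarrow> L j = 0"
  unfolding part_def by blast

lemma part_L0: "part L M \<Longrightarrow> L 0 = 0"
  unfolding part_def by blast

lemma dd_nonneg: "part L M \<Longrightarrow> 1 \<le> j \<Longrightarrow> 0 \<le> dd L j"
  unfolding dd_def using part_anti[of L M j "j+1"] by simp

lemma DD_right_pos: "part L M \<Longrightarrow> DD e L i \<Longrightarrow> 0 < dd L (i+1)"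
  unfolding dd_def using part_anti[of L M "i+1" "i+2"] by (auto simp: DD_def)

lemma DD_left_pos: "part L M \<Longrightarrow> DD e L i \<Longrightarrow> 2 \<le> i \<Longrightarrow> 0 < dd L (i-1)"
proof -
  assume h: "part L M" "DD e L i" "2 \<le> i"
  have "L i \<le> L (i-1)" using part_anti[of L M "i-1" i] h by simp
  moreover have "L (i-1) \<noteq> L i" using h by (simp add: DD_def)
  moreover have "i - 1 + 1 = i" using h by simp
  ultimately show ?thesis unfolding dd_def by simp
qed

lemma DD_le_M: "part L M \<Longrightarrow> DD e L i \<Longrightarrow> i + 1 \<le> M"
  unfolding DD_def using part_zero[of L M "i+1"] by force

lemma gg_DD: "gg e L a \<Longrightarrow> DD e L a"
  unfolding gg_def using lok_DD by blast

lemma zz_nonneg: "part L M \<Longrightarrow> 0 \<le> zz e L M"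
  unfolding zz_def
  by (intro add_nonneg_nonneg sum_nonneg) (auto intro: dd_nonneg pos_imp_zdiv_nonneg_iff[THEN iffD2])

lemma zz_mono_M: assumes P: "part L M" and MM: "M \<le> M'" shows "zz e L M' = zz e L M"
proof -
  have "(\<Sum>j=1..M'. dd L j div 2) = (\<Sum>j=1..M. dd L j div 2)"
    by (rule sum.mono_neutral_right) (use MM part_zero[OF P] in \<open>auto simp: dd_def\<close>)
  moreover have "(\<Sum>a=1..M'. if gg e L a then 1 else 0::int) = (\<Sum>a=1..M. if gg e L a then 1 else 0)"
    by (rule sum.mono_neutral_right) (use MM DD_le_M[OF P] gg_DD in \<open>fastforce+\<close>)
  ultimately show ?thesis unfolding zz_def by simp
qed

section \<open>Case 1 step\<close>

lemma st1_ge2: "part L M \<Longrightarrow> c1 L i \<Longrightarrow> 1 \<le> j \<Longrightarrow> j \<le> i \<Longrightarrow> 2 \<le> L j"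
  using part_anti[of L M j i] unfolding c1_def by simp

lemma part_st1: assumes P: "part L M" and C: "c1 L i" shows "part (st1 L i) M"
  unfolding part_def
proof (intro conjI allI impI)
  show "st1 L i 0 = 0" using part_L0[OF P] by (simp add: st1_def)
next
  fix j k :: nat assume jk: "1 \<le> j \<and> j \<le> k"
  have a: "L k \<le> L j" using part_anti[OF P] jk by blast
  have b: "L (i+1) + 2 \<le> L i" "1 \<le> i" using C by (auto simp: c1_def)
  show "st1 L i k \<le> st1 L i j"
  proof (cases "k \<le> i")
    case True then show ?thesis using a jk by (simp add: st1_def)
  next
    case False
    then have "L k \<le> L (i+1)" using part_anti[OF P, of "i+1" k] by simp
    moreover have "j \<le> i \<Longrightarrow> L i \<le> L j" using part_anti[OF P, of j i] jk by simp
    ultimately show ?thesis using False a b jk by (auto simp: st1_def)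
  qed
next
  fix j assume "M < j"
  then show "st1 L i j = 0" using part_zero[OF P] by (simp add: st1_def)
qed

lemma dd_st1: assumes P: "part L M" and C: "c1 L i" and j: "1 \<le> j"
  shows "dd (st1 L i) j = (if j = i then dd L j - 2 else dd L j)"
proof -
  have "j + 1 \<le> i \<Longrightarrow> 2 \<le> L (j+1)" using st1_ge2[OF P C, of "j+1"] by simp
  moreover have "j \<le> i \<Longrightarrow> 2 \<le> L j" using st1_ge2[OF P C, of j] j by simp
  ultimately show ?thesis unfolding dd_def st1_def by auto
qed

lemma DD_st1: assumes P: "part L M" and C: "c1 L i" and D: "DD e (st1 L i) c"
  shows "DD e L c"
proof -
  have c: "1 \<le> c" using D by (simp add: DD_def)
  have g: "\<And>j. 1 \<le> j \<Longrightarrow> j \<le> i \<Longrightarrow> 2 \<le> L j" using st1_ge2[OF P C] by blast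
  have L0: "L 0 = 0" using part_L0[OF P] .
  have ci: "L (i+1) + 2 \<le> L i" using C by (simp add: c1_def)
  consider "c + 2 \<le> i" | "c + 1 = i" | "c = i" | "c = i + 1" | "i + 2 \<le> c" by linarith
  then show ?thesis
  proof cases
    case 1
    have cm: "c - 1 \<le> i" using 1 by linarith
    have "2 \<le> L c" "2 \<le> L (c+1)" "2 \<le> L (c+2)" using g 1 c by auto
    moreover have "c \<noteq> 1 \<Longrightarrow> 2 \<le> L (c-1)" using g 1 c by auto
    ultimately show ?thesis using D 1 c L0 cm unfolding DD_def st1_def
      by (cases "c = 1") (auto simp: fr_minus2)
  next
    case 2
    have cm: "c - 1 \<le> i" using 2 by linarith
    have "2 \<le> L c" "2 \<le> L (c+1)" using g 2 c by auto
    moreover have "c \<noteq> 1 \<Longrightarrow> 2 \<le> L (c-1)" using g 2 c by auto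
    ultimately show ?thesis using D 2 c L0 ci cm unfolding DD_def st1_def
      by (cases "c = 1") (auto simp: fr_minus2)
  next
    case 3
    have cm: "c - 1 \<le> i" using 3 by linarith
    have "2 \<le> L c" using g 3 c by auto
    moreover have "c \<noteq> 1 \<Longrightarrow> 2 \<le> L (c-1)" using g 3 c by auto
    ultimately show ?thesis using D 3 c L0 ci cm unfolding DD_def st1_def
      by (cases "c = 1") (auto simp: fr_minus2)
  next
    case 4
    show ?thesis using D 4 c L0 ci unfolding DD_def st1_def by auto
  next
    case 5
    have cm: "\<not> c - 1 \<le> i" using 5 by linarith
    show ?thesis using D 5 c L0 ci cm unfolding DD_def st1_def by auto
  qed
qed

lemma DD_st1_rev: assumes P: "part L M" and C: "c1 L i"
  and Mn: "\<forall>j. 1 \<le> j \<and> j < i \<longrightarrow> \<not> DD e L j" and D: "DD e L c" and ND: "\<not> DD e (st1 L i) c"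
  shows "c = i + 1 \<and> dd L i = 2"
proof -
  have c: "1 \<le> c" using D by (simp add: DD_def)
  have g: "\<And>j. 1 \<le> j \<Longrightarrow> j \<le> i \<Longrightarrow> 2 \<le> L j" using st1_ge2[OF P C] by blast
  have L0: "L 0 = 0" using part_L0[OF P] .
  have ci: "L (i+1) + 2 \<le> L i" using C by (simp add: c1_def)
  have "i \<le> c" using Mn D c by (meson not_le)
  then consider "c = i" | "c = i + 1" | "i + 2 \<le> c" by linarith
  then show ?thesis
  proof cases
    case 1
    have "2 \<le> L c" using g 1 c by auto
    moreover have "c \<noteq> 1 \<Longrightarrow> L c \<le> L (c-1)" using part_anti[OF P, of "c-1" c] c by auto
    ultimately have False using D ND 1 c L0 ci unfolding DD_def st1_def
      by (cases "c = 1") (auto simp: fr_minus2)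
    then show ?thesis ..
  next
    case 2
    then show ?thesis using D ND c L0 ci unfolding DD_def st1_def dd_def by auto
  next
    case 3
    have cm: "\<not> c - 1 \<le> i" using 3 by linarith
    then have False using 3 D ND c L0 ci unfolding DD_def st1_def by auto
    then show ?thesis ..
  qed
qed

section \<open>Case 2 step\<close>

lemma c2_facts: assumes P: "part L M" and C: "c2 e L i"
  shows "1 \<le> i" "1 \<le> L i" "L (i+1) = L i" "L (i+2) < L (i+1)" "fr e (L i)"
    "\<And>j. 1 \<le> j \<Longrightarrow> j < i \<Longrightarrow> L i + 1 \<le> L j"
proof -
  show i: "1 \<le> i" and "1 \<le> L i" "L (i+1) = L i" "fr e (L i)"
    using C unfolding c2_def DD_def by auto
  show "L (i+2) < L (i+1)" using C part_anti[OF P, of "i+1" "i+2"] unfolding c2_def DD_def by auto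
  fix j assume j: "1 \<le> j" "j < i"
  have "L (i-1) \<noteq> L i" using C unfolding c2_def DD_def by auto
  moreover have "L i \<le> L (i-1)" using part_anti[OF P, of "i-1" i] j by auto
  moreover have "L (i-1) \<le> L j" using part_anti[OF P, of j "i-1"] j by auto
  ultimately show "L i + 1 \<le> L j" by linarith
qed

lemma part_st2: assumes P: "part L M" and C: "c2 e L i" shows "part (st2 L i) M"
  unfolding part_def
proof (intro conjI allI impI)
  note F = c2_facts[OF P C]
  show "st2 L i 0 = 0" using part_L0[OF P] by (simp add: st2_def)
next
  note F = c2_facts[OF P C]
  fix j k :: nat assume jk: "1 \<le> j \<and> j \<le> k"
  have a: "L k \<le> L j" using part_anti[OF P] jk by blast
  show "st2 L i k \<le> st2 L i j"
  proof (cases "k < i")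
    case True then show ?thesis using a jk by (simp add: st2_def)
  next
    case False
    have "j < i \<Longrightarrow> L i + 1 \<le> L j" using F(6) jk by blast
    moreover have "k \<ge> i + 2 \<Longrightarrow> L k \<le> L (i+2)" using part_anti[OF P, of "i+2" k] by simp
    moreover have "j \<ge> i + 2 \<Longrightarrow> L k \<le> L j" using a .
    ultimately show ?thesis using False a jk F(3,4)
      unfolding st2_def by (cases "k = i"; cases "k = i+1"; auto)
  qed
next
  fix j assume "M < j"
  then show "st2 L i j = 0" using part_zero[OF P] by (simp add: st2_def)
qed

lemma dd_st2: assumes P: "part L M" and C: "c2 e L i" and j: "1 \<le> j"
  shows "dd (st2 L i) j = (if j + 1 = i \<or> j = i + 1 then dd L j - 1 else dd L j)"
proof -
  note F = c2_facts[OF P C]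
  have "j < i \<Longrightarrow> L i + 1 \<le> L j" using F(6) j by blast
  moreover have "j + 1 < i \<Longrightarrow> L i + 1 \<le> L (j+1)" using F(6) j by simp
  ultimately show ?thesis unfolding dd_def st2_def using F(2,3) by auto
qed

lemma DD_st2: assumes P: "part L M" and C: "c2 e L i" and D: "DD e (st2 L i) c"
  shows "DD e L c \<and> c \<noteq> i"
proof -
  note F = c2_facts[OF P C]
  have c: "1 \<le> c" using D by (simp add: DD_def)
  have L0: "L 0 = 0" using part_L0[OF P] .
  have nf: "\<not> fr e (L i - 1)" using fr_minus1 F(2,5) by blast
  consider "c + 2 < i" | "c + 2 = i" | "c + 1 = i" | "c = i" | "c = i + 1" | "c = i + 2" | "i + 2 < c"
    by linarith
  then show ?thesis
  proof cases
    case 1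
    have cm: "c - 1 < i" using 1 by linarith
    have "2 \<le> L c" "2 \<le> L (c+1)" "2 \<le> L (c+2)" using F(6)[of c] F(6)[of "c+1"] F(6)[of "c+2"] F(2) 1 c by auto
    moreover have "c \<noteq> 1 \<Longrightarrow> 2 \<le> L (c-1)"
    proof -
      assume "c \<noteq> 1"
      then have "1 \<le> c - 1" "c - 1 < i" using 1 c by linarith+
      then show ?thesis using F(6)[of "c-1"] F(2) by linarith
    qed
    ultimately show ?thesis using D 1 c L0 cm unfolding DD_def st2_def
      by (cases "c = 1") (auto simp: fr_minus2)
  next
    case 2
    have cm: "c - 1 < i" using 2 by linarith
    have "2 \<le> L c" "2 \<le> L (c+1)" using F(6)[of c] F(6)[of "c+1"] F(2) 2 c by auto
    moreover have "c \<noteq> 1 \<Longrightarrow> 2 \<le> L (c-1)"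
    proof -
      assume "c \<noteq> 1"
      then have "1 \<le> c - 1" "c - 1 < i" using 2 c by linarith+
      then show ?thesis using F(6)[of "c-1"] F(2) by linarith
    qed
    moreover have "L (c+2) < L (c+1)" using F(6)[of "c+1"] 2 by auto
    ultimately show ?thesis using D 2 c L0 cm unfolding DD_def st2_def
      by (cases "c = 1") (auto simp: fr_minus2)
  next
    case 3
    then have False using D nf unfolding DD_def st2_def by auto
    then show ?thesis ..
  next
    case 4
    then have False using D nf unfolding DD_def st2_def by auto
    then show ?thesis ..
  next
    case 5
    then have False using D nf F(3) unfolding DD_def st2_def by auto
    then show ?thesis ..
  next
    case 6
    then show ?thesis using D F unfolding DD_def st2_def by auto
  next
    case 7
    have cm: "\<not> c - 1 < i" "c - 1 \<noteq> i" "c - 1 \<noteq> i + 1" using 7 by linarith+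
    show ?thesis using D 7 cm unfolding DD_def st2_def by auto
  qed
qed

lemma DD_st2_rev: assumes P: "part L M" and C: "c2 e L i" and D: "DD e L c" and ic: "i < c"
  shows "DD e (st2 L i) c"
proof -
  note F = c2_facts[OF P C]
  consider "c = i + 1" | "c = i + 2" | "i + 2 < c" using ic by linarith
  then show ?thesis
  proof cases
    case 1
    then have False using D F(3) unfolding DD_def by auto
    then show ?thesis ..
  next
    case 2
    have "even (int (L (i+1)) - int (L (i+2)))"
      using fr_same_parity[of e "L (i+1)" "L (i+2)"] D F(3,5) 2 unfolding DD_def by auto
    then have "L (i+2) + 2 \<le> L (i+1)" using F(4) by presburger
    then show ?thesis using D 2 unfolding DD_def st2_def by auto
  next
    case 3
    have cm: "\<not> c - 1 < i" "c - 1 \<noteq> i" "c - 1 \<noteq> i + 1" using 3 by linarith+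
    show ?thesis using D 3 cm unfolding DD_def st2_def by auto
  qed
qed

section \<open>Case 1 analysis\<close>

lemma odd_dd_st1: "part L M \<Longrightarrow> c1 L i \<Longrightarrow> 1 \<le> j \<Longrightarrow> odd (dd (st1 L i) j) = odd (dd L j)"
  using dd_st1[of L M i j] by auto

lemma gg_st1: assumes P: "part L M" and C: "c1 L i" and G: "gg e (st1 L i) a" shows "gg e L a"
proof -
  have lk: "lok e (st1 L i) a" and od: "odd (dd (st1 L i) (a+1))" using G by (auto simp: gg_def)
  have "lok e L a"
  proof (rule ccontr)
    assume nl: "\<not> lok e L a"
    from lok_transfer[OF lk, of L] nl obtain c where ch: "chain e (st1 L i) c a"
      and h: "\<not> DD e L c \<or> (2 \<le> c \<and> odd (dd (st1 L i) (c-1)) \<and> even (dd L (c-1)))" by blast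
    have "DD e (st1 L i) c" using chain_DD[OF ch] by simp
    then have "DD e L c" using DD_st1[OF P C] by blast
    with h have h2: "2 \<le> c" "odd (dd (st1 L i) (c-1))" "even (dd L (c-1))" by auto
    have "1 \<le> c - 1" using h2(1) by linarith
    then show False using h2 odd_dd_st1[OF P C, of "c-1"] by auto
  qed
  moreover have "odd (dd L (a+1))" using od odd_dd_st1[OF P C, of "a+1"] by auto
  ultimately show ?thesis by (simp add: gg_def)
qed

lemma gg_st1_rev: assumes P: "part L M" and C: "c1 L i"
  and Mn: "\<forall>j. 1 \<le> j \<and> j < i \<longrightarrow> \<not> DD e L j" and G: "gg e L a" shows "gg e (st1 L i) a"
proof -
  have lk: "lok e L a" and od: "odd (dd L (a+1))" using G by (auto simp: gg_def)
  have "lok e (st1 L i) a"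
  proof (rule ccontr)
    assume nl: "\<not> lok e (st1 L i) a"
    from lok_transfer[OF lk, of "st1 L i"] nl obtain c where ch: "chain e L c a"
      and h: "\<not> DD e (st1 L i) c \<or> (2 \<le> c \<and> odd (dd L (c-1)) \<and> even (dd (st1 L i) (c-1)))" by blast
    have Dc: "DD e L c" using chain_DD[OF ch] by simp
    show False
    proof (cases "DD e (st1 L i) c")
      case True
      with h have h2: "2 \<le> c" "odd (dd L (c-1))" "even (dd (st1 L i) (c-1))" by auto
      have "1 \<le> c - 1" using h2(1) by linarith
      then show False using h2 odd_dd_st1[OF P C, of "c-1"] by auto
    next
      case False
      from DD_st1_rev[OF P C Mn Dc False] have ci: "c = i + 1" "dd L i = 2" by auto
      have i1: "1 \<le> i" using C by (simp add: c1_def)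
      have "lok e L c" using chain_lok[OF ch] lk by simp
      then have "odd (dd L i) \<or> lok e L (i - 1)" using lok_unfold[of c e L] ci i1 by auto
      moreover have "\<not> lok e L (i - 1)"
      proof
        assume "lok e L (i - 1)"
        then have "DD e L (i-1)" by (rule lok_DD)
        then show False using Mn DD_ge1[of e L "i-1"] by auto
      qed
      ultimately show False using ci by simp
    qed
  qed
  moreover have "odd (dd (st1 L i) (a+1))" using od odd_dd_st1[OF P C, of "a+1"] by auto
  ultimately show ?thesis by (simp add: gg_def)
qed

lemma s_st1: assumes P: "part L M" and C: "c1 L i"
  shows "(\<Sum>j=1..M. dd (st1 L i) j div 2) = (\<Sum>j=1..M. dd L j div 2) - 1"
proof -
  have iM: "i \<in> {1..M}" using C part_zero[OF P, of i] by (auto simp: c1_def) (metis not_le)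
  have "(\<Sum>j=1..M. dd (st1 L i) j div 2) = (\<Sum>j=1..M. dd L j div 2 - (if j = i then 1 else 0))"
    by (rule sum.cong) (auto simp: dd_st1[OF P C])
  also have "\<dots> = (\<Sum>j=1..M. dd L j div 2) - (\<Sum>j=1..M. if j = i then 1 else 0)"
    by (simp add: sum_subtractf)
  also have "(\<Sum>j=1..M. if j = i then 1 else 0::int) = 1" using iM by simp
  finally show ?thesis .
qed

lemma zz_st1_le: assumes P: "part L M" and C: "c1 L i"
  shows "zz e (st1 L i) M + 1 \<le> zz e L M"
proof -
  have "(\<Sum>a=1..M. if gg e (st1 L i) a then 1 else 0::int) \<le> (\<Sum>a=1..M. if gg e L a then 1 else 0)"
    by (rule sum_mono) (use gg_st1[OF P C] in auto)
  then show ?thesis unfolding zz_def using s_st1[OF P C] by linarith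
qed

lemma zz_st1_eq: assumes P: "part L M" and C: "c1 L i"
  and Mn: "\<forall>j. 1 \<le> j \<and> j < i \<longrightarrow> \<not> DD e L j"
  shows "zz e (st1 L i) M + 1 = zz e L M"
proof -
  have "(\<Sum>a=1..M. if gg e (st1 L i) a then 1 else 0::int) = (\<Sum>a=1..M. if gg e L a then 1 else 0)"
    by (rule sum.cong) (use gg_st1[OF P C] gg_st1_rev[OF P C Mn] in auto)
  then show ?thesis unfolding zz_def using s_st1[OF P C] by linarith
qed

section \<open>Case 2 analysis\<close>

lemma sum_ind_card: "finite A \<Longrightarrow> (\<Sum>a\<in>A. if P a then 1 else 0::int) = int (card {a\<in>A. P a})"
  by (simp add: sum.inter_filter[symmetric])

lemma sum_ind_le1: assumes "finite A" and "\<And>a b. a \<in> A \<Longrightarrow> b \<in> A \<Longrightarrow> P a \<Longrightarrow> P b \<Longrightarrow> a = b"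
  shows "(\<Sum>a\<in>A. if P a then 1 else 0::int) \<le> 1"
proof -
  have "card {a\<in>A. P a} \<le> Suc 0" using assms by (subst card_le_Suc0_iff_eq) auto
  then show ?thesis using sum_ind_card[OF assms(1), of P] by simp
qed

lemma div2_minus1: "((d::int) - 1) div 2 = d div 2 - (if even d then 1 else 0)"
proof (cases "even d")
  case True then obtain k where "d = 2 * k" by (elim evenE)
  then show ?thesis by simp
next
  case False then obtain k where "d = 2 * k + 1" by (elim oddE)
  then show ?thesis by simp
qed

lemma odd_dd_st2: "part L M \<Longrightarrow> c2 e L i \<Longrightarrow> 1 \<le> j \<Longrightarrow>
   odd (dd (st2 L i) j) = (if j + 1 = i \<or> j = i + 1 then \<not> odd (dd L j) else odd (dd L j))"
  using dd_st2[of L M e i j] by auto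

lemma chain_mono: "chain e L' b a \<Longrightarrow> (\<And>c. DD e L' c \<Longrightarrow> DD e L c) \<Longrightarrow> chain e L b a"
  unfolding chain_def by blast

lemma chain_cons: "DD e L b \<Longrightarrow> chain e L (b+2) a \<Longrightarrow> chain e L b a"
  unfolding chain_def
proof (intro conjI allI impI)
  fix c assume h: "DD e L b" "b + 2 \<le> a \<and> even (a - (b + 2)) \<and> (\<forall>c. b + 2 \<le> c \<and> c \<le> a \<and> even (a - c) \<longrightarrow> DD e L c)"
    "b \<le> c \<and> c \<le> a \<and> even (a - c)"
  show "DD e L c"
  proof (cases "c = b")
    case True then show ?thesis using h by simp
  next
    case False
    have "even (a - b)" using h(2) by (auto simp: even_diff_nat; linarith)
    moreover have "c \<noteq> b + 1"
    proof
      assume "c = b + 1"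
      then have "a - b = (a - c) + 1" using h(3) by arith
      then show False using \<open>even (a - b)\<close> h(3) by simp
    qed
    ultimately have "b + 2 \<le> c" using h(3) False by linarith
    then show ?thesis using h by blast
  qed
next
  assume "DD e L b" "b + 2 \<le> a \<and> even (a - (b + 2)) \<and> (\<forall>c. b + 2 \<le> c \<and> c \<le> a \<and> even (a - c) \<longrightarrow> DD e L c)"
  then show "b \<le> a" "even (a - b)" by (auto simp: even_diff_nat)
qed

lemma chain_two: assumes "chain e L b x" "chain e L b y" "x < y" shows "DD e L (x+2)"
proof -
  have "even (x - b)" "even (y - b)" "b \<le> x" "x \<le> y" using assms unfolding chain_def by auto
  moreover have "y - b = (y - x) + (x - b)" using \<open>b \<le> x\<close> \<open>x \<le> y\<close> by linarith
  ultimately have "even (y - x)" by (metis even_add)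
  then have "x + 2 \<le> y" using even_gap_nat[of x y] assms(3) by auto
  moreover have "y - (x+2) = (y - x) - 2" by simp
  ultimately have "y - x = (y - (x+2)) + 2" by linarith
  then have "even ((y - (x+2)) + 2)" using \<open>even (y - x)\<close> by metis
  then have "even (y - (x+2))" by simp
  then show ?thesis using assms(2) \<open>b \<le> x\<close> \<open>x + 2 \<le> y\<close> unfolding chain_def by auto
qed

lemma chain_tail: assumes "chain e L b a" "b < a" shows "chain e L (b+2) a"
proof -
  have h: "b \<le> a" "even (a - b)" "\<forall>c. b \<le> c \<and> c \<le> a \<and> even (a - c) \<longrightarrow> DD e L c"
    using assms(1) unfolding chain_def by auto
  have "b + 2 \<le> a" using even_gap_nat[of b a] h assms(2) by auto
  moreover have "a - b = (a - (b+2)) + 2" using \<open>b + 2 \<le> a\<close> by arith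
  then have "even (a - (b+2))" using h(2) by (metis even_add even_numeral)
  ultimately show ?thesis using h unfolding chain_def by auto
qed

lemma s_st2: assumes P: "part L M" and C: "c2 e L i"
  shows "(\<Sum>j=1..M. dd (st2 L i) j div 2) = (\<Sum>j=1..M. dd L j div 2)
     - (if 2 \<le> i \<and> even (dd L (i-1)) then 1 else 0) - (if even (dd L (i+1)) then 1 else 0)"
proof -
  have i1: "1 \<le> i" using C by (simp add: c2_def DD_def)
  have iM: "i + 1 \<le> M" using DD_le_M[OF P, of e i] C by (simp add: c2_def)
  have "(\<Sum>j=1..M. dd (st2 L i) j div 2) = (\<Sum>j=1..M. dd L j div 2
      - (if j = i - 1 then (if 2 \<le> i \<and> even (dd L (i-1)) then 1 else 0) else 0)
      - (if j = i + 1 then (if even (dd L (i+1)) then 1 else 0) else 0))"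
  proof (rule sum.cong)
    fix j assume j: "j \<in> {1..M}"
    show "dd (st2 L i) j div 2 = dd L j div 2
      - (if j = i - 1 then (if 2 \<le> i \<and> even (dd L (i-1)) then 1 else 0) else 0)
      - (if j = i + 1 then (if even (dd L (i+1)) then 1 else 0) else 0)"
      using dd_st2[OF P C, of j] j i1 div2_minus1 by auto
  qed simp
  also have "\<dots> = (\<Sum>j=1..M. dd L j div 2)
      - (\<Sum>j=1..M. if j = i - 1 then (if 2 \<le> i \<and> even (dd L (i-1)) then 1 else 0) else 0)
      - (\<Sum>j=1..M. if j = i + 1 then (if even (dd L (i+1)) then 1 else 0) else 0::int)"
    by (simp add: sum_subtractf)
  also have "(\<Sum>j=1..M. if j = i - 1 then (if 2 \<le> i \<and> even (dd L (i-1)) then 1 else 0) else 0::int)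
      = (if 2 \<le> i \<and> even (dd L (i-1)) then 1 else 0)"
    using iM by (subst sum.delta) auto
  also have "(\<Sum>j=1..M. if j = i + 1 then (if even (dd L (i+1)) then 1 else 0) else 0::int)
      = (if even (dd L (i+1)) then 1 else 0)"
    using iM by (subst sum.delta) auto
  finally show ?thesis .
qed

lemma gg_st2_i: assumes P: "part L M" and C: "c2 e L i" shows "\<not> gg e (st2 L i) i"
  using DD_st2[OF P C] gg_DD by blast

lemma gg_st2_P1: assumes P: "part L M" and C: "c2 e L i"
  and a: "1 \<le> a" "a \<noteq> i" "a + 2 \<noteq> i" and G: "gg e (st2 L i) a"
  shows "gg e L a \<or> (chain e (st2 L i) (i+2) a \<and> odd (dd (st2 L i) (a+1)) \<and> \<not> gg e L a)"
proof -
  have lk: "lok e (st2 L i) a" and od': "odd (dd (st2 L i) (a+1))" using G by (auto simp: gg_def)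
  have od: "odd (dd L (a+1))" using od' odd_dd_st2[OF P C, of "a+1"] a by auto
  show ?thesis
  proof (cases "lok e L a")
    case True then show ?thesis using od by (simp add: gg_def)
  next
    case nl: False
    from lok_transfer[OF lk, of L] nl obtain c where ch: "chain e (st2 L i) c a"
      and h: "\<not> DD e L c \<or> (2 \<le> c \<and> odd (dd (st2 L i) (c-1)) \<and> even (dd L (c-1)))" by blast
    have "DD e (st2 L i) c" using chain_DD[OF ch] by simp
    then have Dc: "DD e L c" "c \<noteq> i" using DD_st2[OF P C] by auto
    with h have h2: "2 \<le> c" "odd (dd (st2 L i) (c-1))" "even (dd L (c-1))" by auto
    have "1 \<le> c - 1" using h2(1) by linarith
    then have "c - 1 + 1 = i \<or> c - 1 = i + 1" using h2 odd_dd_st2[OF P C, of "c-1"] by (auto split: if_splits)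
    then have "c = i + 2" using Dc(2) h2(1) by auto
    then show ?thesis using ch od' nl by (simp add: gg_def)
  qed
qed

lemma gg_st2_P3: assumes P: "part L M" and C: "c2 e L i"
  and i3: "3 \<le> i" and G: "gg e (st2 L i) (i-2)"
  shows "lok e L (i-2)"
proof (rule ccontr)
  assume nl: "\<not> lok e L (i-2)"
  have lk: "lok e (st2 L i) (i-2)" using G by (auto simp: gg_def)
  from lok_transfer[OF lk, of L] nl obtain c where ch: "chain e (st2 L i) c (i-2)"
    and h: "\<not> DD e L c \<or> (2 \<le> c \<and> odd (dd (st2 L i) (c-1)) \<and> even (dd L (c-1)))" by blast
  have "DD e (st2 L i) c" using chain_DD[OF ch] by simp
  then have Dc: "DD e L c" "c \<noteq> i" using DD_st2[OF P C] by auto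
  with h have h2: "2 \<le> c" "odd (dd (st2 L i) (c-1))" "even (dd L (c-1))" by auto
  have "1 \<le> c - 1" using h2(1) by linarith
  then have "c - 1 + 1 = i \<or> c - 1 = i + 1" using h2 odd_dd_st2[OF P C, of "c-1"] by (auto split: if_splits)
  moreover have "c \<le> i - 2" using ch by (simp add: chain_def)
  ultimately show False using i3 h2(1) by linarith
qed

lemma r_facts: assumes P: "part L M" and C: "c2 e L i"
  and ch: "chain e (st2 L i) (i+2) a" and od: "odd (dd (st2 L i) (a+1))" and ng: "\<not> gg e L a"
  shows "even (dd L (i+1)) \<and> \<not> lok e L i"
proof
  have D2: "DD e L (i+2)" using chain_DD[OF ch] DD_st2[OF P C] by blast
  have Di: "DD e L i" using C by (simp add: c2_def)
  show "even (dd L (i+1))" using even_gap[OF Di] D2 by simp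
  show "\<not> lok e L i"
  proof
    assume li: "lok e L i"
    have "chain e L (i+2) a" using chain_mono[OF ch] DD_st2[OF P C] by blast
    then have "chain e L i a" using chain_cons[OF Di] by simp
    then have "lok e L a" using chain_lok li by blast
    moreover have "i + 2 \<le> a" using ch by (simp add: chain_def)
    then have "odd (dd L (a+1))" using od odd_dd_st2[OF P C, of "a+1"] by auto
    ultimately show False using ng by (simp add: gg_def)
  qed
qed

lemma r_unique: assumes ch1: "chain e L b x" and o1: "odd (dd L (x+1))"
  and ch2: "chain e L b y" and o2: "odd (dd L (y+1))" shows "x = y"
proof (rule ccontr)
  assume "x \<noteq> y"
  then consider "x < y" | "y < x" by linarith
  then show False
  proof cases
    case 1
    have "DD e L x" using chain_DD[OF ch1] by simp
    moreover have "DD e L (x+2)" using chain_two[OF ch1 ch2 1] .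
    ultimately have "even (dd L (x+1))" by (rule even_gap)
    then show False using o1 by simp
  next
    case 2
    have "DD e L y" using chain_DD[OF ch2] by simp
    moreover have "DD e L (y+2)" using chain_two[OF ch2 ch1 2] .
    ultimately have "even (dd L (y+1))" by (rule even_gap)
    then show False using o2 by simp
  qed
qed

lemma zz_st2_le: assumes P: "part L M" and C: "c2 e L i"
  shows "zz e (st2 L i) M + 1 \<le> zz e L M"
proof -
  define L' where "L' = st2 L i"
  define eL where "eL = (2 \<le> i \<and> even (dd L (i-1)))"
  define eR where "eR = even (dd L (i+1))"
  define TL where "TL = (3 \<le> i \<and> gg e L' (i-2) \<and> \<not> gg e L (i-2))"
  define R where "R = (\<lambda>a. chain e L' (i+2) a \<and> odd (dd L' (a+1)) \<and> \<not> gg e L a)"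
  have i1: "1 \<le> i" and Di: "DD e L i" using C by (auto simp: c2_def DD_def)
  have iM: "i \<le> M" using DD_le_M[OF P Di] by simp
  have pw: "(if gg e L' a then 1 else 0::int) \<le> (if gg e L a then 1 else 0)
      - (if a = i then (if gg e L i then 1 else 0) else 0)
      + (if a = i - 2 then (if TL then 1 else 0) else 0) + (if R a then 1 else 0)"
    if a: "a \<in> {1..M}" for a
  proof -
    consider "a = i" | "a \<noteq> i" "a + 2 = i" | "a \<noteq> i" "a + 2 \<noteq> i" by blast
    then show ?thesis
    proof cases
      case 1 then show ?thesis using gg_st2_i[OF P C] unfolding L'_def by auto
    next
      case 2
      then have "a = i - 2" "3 \<le> i" using a by auto
      then show ?thesis unfolding TL_def using 2 by auto
    next
      case 3
      then show ?thesis using gg_st2_P1[OF P C, of a] a unfolding L'_def R_def by auto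
    qed
  qed
  have "(\<Sum>a=1..M. if gg e L' a then 1 else 0::int) \<le> (\<Sum>a=1..M. (if gg e L a then 1 else 0)
      - (if a = i then (if gg e L i then 1 else 0) else 0)
      + (if a = i - 2 then (if TL then 1 else 0) else 0) + (if R a then 1 else 0))"
    by (rule sum_mono) (rule pw)
  also have "\<dots> = (\<Sum>a=1..M. if gg e L a then 1 else 0) - (\<Sum>a=1..M. if a = i then (if gg e L i then 1 else 0) else 0)
      + (\<Sum>a=1..M. if a = i - 2 then (if TL then 1 else 0) else 0) + (\<Sum>a=1..M. if R a then 1 else 0::int)"
    by (simp add: sum.distrib sum_subtractf)
  also have "(\<Sum>a=1..M. if a = i then (if gg e L i then 1 else 0) else 0::int) = (if gg e L i then 1 else 0)"
    using i1 iM by (subst sum.delta) auto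
  also have "(\<Sum>a=1..M. if a = i - 2 then (if TL then 1 else 0) else 0::int) \<le> (if TL then 1 else 0)"
    by (subst sum.delta) auto
  finally have main: "(\<Sum>a=1..M. if gg e L' a then 1 else 0::int) \<le> (\<Sum>a=1..M. if gg e L a then 1 else 0)
      - (if gg e L i then 1 else 0) + (if TL then 1 else 0) + (\<Sum>a=1..M. if R a then 1 else 0::int)"
    by linarith
  have Rle: "(\<Sum>a=1..M. if R a then 1 else 0::int) \<le> 1"
    by (rule sum_ind_le1) (auto simp: R_def intro: r_unique)
  have Rge: "(\<Sum>a=1..M. if R a then 1 else 0::int) \<ge> 0" by (rule sum_nonneg) auto
  have fR: "R a \<Longrightarrow> eR \<and> \<not> lok e L i" for a
    using r_facts[OF P C] unfolding R_def eR_def L'_def by blast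
  have R0: "\<not> (eR \<and> \<not> lok e L i) \<Longrightarrow> (\<Sum>a=1..M. if R a then 1 else 0::int) = 0"
    by (rule sum.neutral) (use fR in auto)
  have fT: "TL \<Longrightarrow> eL \<and> lok e L i"
  proof -
    assume T: TL
    then have i3: "3 \<le> i" and G: "gg e L' (i-2)" unfolding TL_def by auto
    have lk: "lok e L (i-2)" using gg_st2_P3[OF P C i3] G unfolding L'_def by simp
    then have D2: "DD e L (i-2)" by (rule lok_DD)
    have "i - 2 + 2 = i" "i - 2 + 1 = i - 1" using i3 by auto
    then have "even (dd L (i-1))" using even_gap[OF D2] Di by simp
    moreover have "lok e L i" using lok_unfold[of i e L] i1 Di lk by auto
    ultimately show ?thesis using i3 unfolding eL_def by auto
  qed
  have f3: "\<not> eL \<Longrightarrow> lok e L i"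
    using lok_unfold[of i e L] i1 Di unfolding eL_def by auto
  have f4: "gg e L i = (lok e L i \<and> \<not> eR)" unfolding gg_def eR_def by simp
  have s: "(\<Sum>j=1..M. dd L' j div 2) = (\<Sum>j=1..M. dd L j div 2) - (if eL then 1 else 0) - (if eR then 1 else 0)"
    using s_st2[OF P C] unfolding L'_def eL_def eR_def .
  have "(\<Sum>a=1..M. if gg e L' a then 1 else 0::int) \<le> (\<Sum>a=1..M. if gg e L a then 1 else 0)
        - 1 + (if eL then 1 else 0) + (if eR then 1 else 0)"
  proof (cases "eR \<and> \<not> lok e L i")
    case True
    then have "\<not> TL" using fT by blast
    moreover have "\<not> gg e L i" using f4 True by simp
    moreover have "eL" using True f3 by blast
    ultimately show ?thesis using main Rle True by simp
  next
    case False
    then have "(\<Sum>a=1..M. if R a then 1 else 0::int) = 0" using R0 by simp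
    then show ?thesis using main False fT f3 f4 by (cases eL; cases eR; cases TL; auto)
  qed
  then show ?thesis unfolding zz_def L'_def[symmetric] using s by linarith
qed

lemma gg_st2_rev_min: assumes P: "part L M" and C: "c2 e L i"
  and Mn: "\<forall>j. 1 \<le> j \<and> j < i \<longrightarrow> \<not> DD e L j" and ai: "a \<noteq> i" and G: "gg e L a"
  shows "gg e (st2 L i) a"
proof -
  have lk: "lok e L a" and od: "odd (dd L (a+1))" using G by (auto simp: gg_def)
  have Da: "DD e L a" using lk by (rule lok_DD)
  have Di: "DD e L i" and Lii: "L i = L (i+1)" using C by (auto simp: c2_def)
  have "i \<le> a" using Mn Da DD_ge1[OF Da] by (meson not_le)
  moreover have "a \<noteq> i + 1" using Da Lii by (auto simp: DD_def)
  ultimately have ai2: "i + 2 \<le> a" using ai by linarith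
  have od': "odd (dd (st2 L i) (a+1))" using od odd_dd_st2[OF P C, of "a+1"] ai2 by auto
  have "lok e (st2 L i) a"
  proof (rule ccontr)
    assume nl: "\<not> lok e (st2 L i) a"
    from lok_transfer[OF lk, of "st2 L i"] nl obtain c where ch: "chain e L c a"
      and h: "\<not> DD e (st2 L i) c \<or> (2 \<le> c \<and> odd (dd L (c-1)) \<and> even (dd (st2 L i) (c-1)))" by blast
    have Dc: "DD e L c" using chain_DD[OF ch] by simp
    have "i \<le> c" using Mn Dc DD_ge1[OF Dc] by (meson not_le)
    show False
    proof (cases "c = i")
      case False
      with \<open>i \<le> c\<close> have "i < c" by simp
      then have D'c: "DD e (st2 L i) c" using DD_st2_rev[OF P C Dc] by simp
      with h have h2: "2 \<le> c" "odd (dd L (c-1))" "even (dd (st2 L i) (c-1))" by auto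
      have "1 \<le> c - 1" using h2(1) by linarith
      then have "c - 1 + 1 = i \<or> c - 1 = i + 1" using h2 odd_dd_st2[OF P C, of "c-1"] by (auto split: if_splits)
      then have "c = i + 2" using \<open>i < c\<close> by auto
      then have "even (dd L (i+1))" using even_gap[OF Di] Dc by simp
      then show False using h2 \<open>c = i + 2\<close> by simp
    next
      case True
      have ch2: "chain e L (i+2) a" using chain_tail[of e L i a] ch True ai2 by simp
      have ch2': "chain e (st2 L i) (i+2) a"
        using ch2 DD_st2_rev[OF P C] unfolding chain_def by auto
      have D2: "DD e (st2 L i) (i+2)" using chain_DD[OF ch2'] by simp
      have "DD e L (i+2)" using chain_DD[OF ch2] by simp
      then have "even (dd L (i+1))" using even_gap[OF Di] by simp
      then have "odd (dd (st2 L i) (i+1))" using odd_dd_st2[OF P C, of "i+1"] by simp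
      then have "lok e (st2 L i) (i+2)" using lok_unfold[of "i+2" e "st2 L i"] D2 by simp
      then show False using chain_lok[OF ch2'] nl by simp
    qed
  qed
  then show ?thesis using od' by (simp add: gg_def)
qed

lemma zz_st2_eq: assumes P: "part L M" and C: "c2 e L i"
  and Mn: "\<forall>j. 1 \<le> j \<and> j < i \<longrightarrow> \<not> DD e L j" and Md: "2 \<le> i \<longrightarrow> dd L (i-1) \<le> 1"
  shows "zz e (st2 L i) M + 1 = zz e L M"
proof -
  define L' where "L' = st2 L i"
  have i1: "1 \<le> i" and Di: "DD e L i" using C by (auto simp: c2_def DD_def)
  have iM: "i \<le> M" using DD_le_M[OF P Di] by simp
  have neL: "\<not> (2 \<le> i \<and> even (dd L (i-1)))"
  proof
    assume h: "2 \<le> i \<and> even (dd L (i-1))"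
    then have "0 < dd L (i-1)" using DD_left_pos[OF P Di] by simp
    then have "dd L (i-1) = 1" using Md h by simp
    then show False using h by simp
  qed
  have li: "lok e L i" using lok_unfold[of i e L] i1 Di neL by auto
  have pw: "(if gg e L' a then 1 else 0::int) = (if gg e L a then 1 else 0)
      - (if a = i then (if gg e L i then 1 else 0) else 0)" if a: "a \<in> {1..M}" for a
  proof (cases "a = i")
    case True then show ?thesis using gg_st2_i[OF P C] unfolding L'_def by auto
  next
    case False
    have "gg e L' a = gg e L a"
    proof
      assume G': "gg e L' a"
      show "gg e L a"
      proof (cases "a + 2 = i")
        case True
        have "DD e L a" using gg_DD[OF G'] DD_st2[OF P C] unfolding L'_def by blast
        then show ?thesis using Mn True a by auto
      next
        case ne: False
        show ?thesis using gg_st2_P1[OF P C, of a] a False ne G' r_facts[OF P C, of a] li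
          unfolding L'_def by auto
      qed
    next
      assume "gg e L a" then show "gg e L' a" using gg_st2_rev_min[OF P C Mn False] unfolding L'_def by simp
    qed
    then show ?thesis using False by simp
  qed
  have "(\<Sum>a=1..M. if gg e L' a then 1 else 0::int) = (\<Sum>a=1..M. (if gg e L a then 1 else 0)
      - (if a = i then (if gg e L i then 1 else 0) else 0))"
    by (rule sum.cong) (auto simp: pw)
  also have "\<dots> = (\<Sum>a=1..M. if gg e L a then 1 else 0) - (if gg e L i then 1 else 0)"
    using i1 iM by (simp add: sum_subtractf sum.delta)
  finally have G: "(\<Sum>a=1..M. if gg e L' a then 1 else 0::int) = (\<Sum>a=1..M. if gg e L a then 1 else 0) - (if gg e L i then 1 else 0)" .
  have s: "(\<Sum>j=1..M. dd L' j div 2) = (\<Sum>j=1..M. dd L j div 2) - (if even (dd L (i+1)) then 1 else 0)"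
    using s_st2[OF P C] neL unfolding L'_def by simp
  have "gg e L i = odd (dd L (i+1))" using li by (simp add: gg_def)
  then show ?thesis unfolding zz_def L'_def[symmetric] using G s by auto
qed

lemma noapp: assumes P: "part L M" and j: "1 \<le> j" and n1: "\<not> c1 L j" and n2: "\<not> c2 e L j"
  shows "dd L j \<le> 1 \<and> \<not> DD e L j"
proof
  show d: "dd L j \<le> 1" using n1 j unfolding c1_def dd_def by auto
  show "\<not> DD e L j"
  proof
    assume D: "DD e L j"
    then have "L j \<noteq> L (j+1)" using n2 by (simp add: c2_def)
    moreover have "L (j+1) \<le> L j" using part_anti[OF P, of j "j+1"] j by simp
    moreover have "even (dd L j)" using fr_same_parity[of e "L j" "L (j+1)"] D unfolding DD_def dd_def by simp
    ultimately show False using d unfolding dd_def by presburger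
  qed
qed

lemma zz_zero: assumes P: "part L M" and N: "\<forall>j. 1 \<le> j \<longrightarrow> \<not> c1 L j \<and> \<not> c2 e L j"
  shows "zz e L M = 0"
proof -
  have "(\<Sum>j=1..M. dd L j div 2) = 0"
  proof (rule sum.neutral, intro ballI)
    fix j assume "j \<in> {1..M}"
    then have "0 \<le> dd L j" "dd L j \<le> 1" using noapp[OF P, of j e] N dd_nonneg[OF P, of j] by auto
    then show "dd L j div 2 = 0" by simp
  qed
  moreover have "(\<Sum>a=1..M. if gg e L a then 1 else 0::int) = 0"
  proof (rule sum.neutral, intro ballI)
    fix a assume a: "a \<in> {1..M}"
    have "\<not> DD e L a" using noapp[OF P, of a e] N a by auto
    then show "(if gg e L a then 1 else 0::int) = 0" using gg_DD by auto
  qed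
  ultimately show ?thesis unfolding zz_def by simp
qed

lemma zz_step_exists: assumes P: "part L M" and Z: "0 < zz e L M"
  shows "\<exists>i. (c1 L i \<and> zz e (st1 L i) M + 1 = zz e L M) \<or>
             (c2 e L i \<and> \<not> c1 L i \<and> zz e (st2 L i) M + 1 = zz e L M)"
proof -
  have "\<exists>i. c1 L i \<or> c2 e L i"
  proof (rule ccontr)
    assume "\<not> (\<exists>i. c1 L i \<or> c2 e L i)"
    then have "zz e L M = 0" using zz_zero[OF P] by blast
    then show False using Z by simp
  qed
  then obtain i0 where "c1 L i0 \<or> c2 e L i0" by blast
  define i where "i = (LEAST i. c1 L i \<or> c2 e L i)"
  have Ci: "c1 L i \<or> c2 e L i" unfolding i_def by (rule LeastI) fact
  have Mall: "\<forall>j. 1 \<le> j \<and> j < i \<longrightarrow> dd L j \<le> 1 \<and> \<not> DD e L j"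
  proof (intro allI impI)
    fix j assume j: "1 \<le> j \<and> j < i"
    then have "\<not> (c1 L j \<or> c2 e L j)" unfolding i_def using not_less_Least by blast
    then show "dd L j \<le> 1 \<and> \<not> DD e L j" using noapp[OF P, of j] j by blast
  qed
  then have Mn: "\<forall>j. 1 \<le> j \<and> j < i \<longrightarrow> \<not> DD e L j" by blast
  show ?thesis
  proof (cases "c1 L i")
    case True
    then show ?thesis using zz_st1_eq[OF P True Mn] by blast
  next
    case False
    with Ci have C2: "c2 e L i" by simp
    have "2 \<le> i \<longrightarrow> dd L (i-1) \<le> 1" using Mall by auto
    then show ?thesis using zz_st2_eq[OF P C2 Mn] C2 False by blast
  qed
qed

section \<open>Link with lists\<close>

lemma lam_Nil: "lam [] j = 0"
  by (simp add: lam_def)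

lemma lam_Cons: "lam (y # ys) j = (if j = 0 then 0 else if j = 1 then y else lam ys (j - 1))"
  unfolding lam_def by (auto simp: nth_Cons')

lemma lam_zero_set: "(\<forall>x\<in>set ys. x = 0) \<Longrightarrow> lam ys j = 0"
  unfolding lam_def by auto

lemma lam_filter: "sorted_wrt (\<ge>) ys \<Longrightarrow> lam (filter (\<lambda>x. 0 < x) ys) = lam ys"
proof (induction ys)
  case Nil then show ?case by simp
next
  case (Cons y ys)
  have s: "sorted_wrt (\<ge>) ys" "\<forall>x\<in>set ys. x \<le> y" using Cons.prems by auto
  show ?case
  proof (cases "0 < y")
    case True
    then show ?thesis using Cons.IH[OF s(1)] by (auto simp: lam_Cons fun_eq_iff)
  next
    case False
    then have "\<forall>x\<in>set ys. x = 0" using s(2) by auto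
    then have "filter (\<lambda>x. 0 < x) (y # ys) = []" using False by auto
    moreover have "lam (y # ys) j = 0" for j
      using \<open>\<forall>x\<in>set ys. x = 0\<close> False lam_zero_set[of ys] by (simp add: lam_Cons)
    ultimately show ?thesis by (simp add: fun_eq_iff lam_Nil)
  qed
qed

lemma lam_map_upt: "lam (map f [1..<n+1]) j = (if 1 \<le> j \<and> j \<le> n then f j else 0)"
  unfolding lam_def by (auto simp del: upt_Suc simp: nth_upt)

lemma lam_map_upt_eq: "f 0 = 0 \<Longrightarrow> (\<forall>j>n. f j = 0) \<Longrightarrow> lam (map f [1..<n+1]) = f"
  by (rule ext, simp only: lam_map_upt) (auto simp: not_le)

lemma sorted_map_upt: "part f M \<Longrightarrow> sorted_wrt (\<ge>) (map f [1..<n+1])"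
  unfolding sorted_wrt_iff_nth_less using part_anti[of f M] by (auto simp del: upt_Suc simp: nth_upt)

lemma part_lam: "sorted_wrt (\<ge>) xs \<Longrightarrow> part (lam xs) (length xs)"
  unfolding part_def
proof (intro conjI allI impI)
  assume s: "sorted_wrt (\<ge>) xs"
  fix j k :: nat assume jk: "1 \<le> j \<and> j \<le> k"
  show "lam xs k \<le> lam xs j"
  proof (cases "k \<le> length xs")
    case True
    then show ?thesis using s jk unfolding lam_def sorted_wrt_iff_nth_less
      by (cases "j = k") (auto)
  next
    case False then show ?thesis by (simp add: lam_def)
  qed
qed (auto simp: lam_def)

lemma lam_pos: "(\<forall>x\<in>set xs. 0 < x) \<Longrightarrow> 0 < lam xs j \<longleftrightarrow> 1 \<le> j \<and> j \<le> length xs"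
  unfolding lam_def by auto

lemma case1_iff: "case1 xs i \<longleftrightarrow> c1 (lam xs) i"
  unfolding case1_def c1_def by (auto simp: lam_def split: if_splits)

lemma two_steps_iff: "(\<forall>x\<in>set xs. 0 < x) \<Longrightarrow>
   two_steps eps xs = (\<lambda>i. (i, i+1)) ` {i. DD eps (lam xs) i}"
  unfolding two_steps_def DD_def fr_def using lam_pos[of xs]
  by (auto simp: image_def)

lemma case2_iff: "(\<forall>x\<in>set xs. 0 < x) \<Longrightarrow> case2 eps xs i \<longleftrightarrow> c2 eps (lam xs) i"
  unfolding case2_def c2_def using two_steps_iff[of xs eps] lam_pos[of xs "i+1"]
  by (auto simp: DD_def)

lemma ks_step1: assumes s: "sorted_wrt (\<ge>) xs" and p: "\<forall>x\<in>set xs. 0 < x" and C: "case1 xs i"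
  shows "lam (ks_step eps xs i) = st1 (lam xs) i \<and> sorted_wrt (\<ge>) (ks_step eps xs i) \<and>
         (\<forall>x\<in>set (ks_step eps xs i). 0 < x) \<and> length (ks_step eps xs i) \<le> length xs"
proof -
  define L where "L = lam xs"
  define n where "n = length xs"
  have P: "part L n" using part_lam[OF s] unfolding L_def n_def .
  have C1: "c1 L i" using C case1_iff unfolding L_def by blast
  have P': "part (st1 L i) n" using part_st1[OF P C1] .
  have ks: "ks_step eps xs i = filter (\<lambda>x. 0 < x) (map (st1 L i) [1..<n+1])"
    unfolding ks_step_def using C by (simp add: st1_def L_def n_def)
  have so: "sorted_wrt (\<ge>) (map (st1 L i) [1..<n+1])" using sorted_map_upt[OF P'] .
  have "lam (ks_step eps xs i) = lam (map (st1 L i) [1..<n+1])" unfolding ks using lam_filter[OF so] .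
  also have "\<dots> = st1 L i" using lam_map_upt_eq[of "st1 L i" n] part_L0[OF P'] part_zero[OF P'] by simp
  finally show ?thesis unfolding ks L_def[symmetric] n_def[symmetric]
    using so sorted_wrt_filter length_filter_le[of _ "map (st1 L i) [1..<n+1]"]
    by (auto simp del: upt_Suc)
qed

lemma ks_step2: assumes s: "sorted_wrt (\<ge>) xs" and p: "\<forall>x\<in>set xs. 0 < x" and C: "case2 eps xs i"
  and N: "\<not> case1 xs i"
  shows "lam (ks_step eps xs i) = st2 (lam xs) i \<and> sorted_wrt (\<ge>) (ks_step eps xs i) \<and>
         (\<forall>x\<in>set (ks_step eps xs i). 0 < x) \<and> length (ks_step eps xs i) \<le> length xs"
proof -
  define L where "L = lam xs"
  define n where "n = length xs"
  have P: "part L n" using part_lam[OF s] unfolding L_def n_def .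
  have C2: "c2 eps L i" using C case2_iff[OF p] unfolding L_def by blast
  have P': "part (st2 L i) n" using part_st2[OF P C2] .
  have ks: "ks_step eps xs i = filter (\<lambda>x. 0 < x) (map (st2 L i) [1..<n+1])"
    unfolding ks_step_def using C N by (simp add: st2_def L_def n_def)
  have so: "sorted_wrt (\<ge>) (map (st2 L i) [1..<n+1])" using sorted_map_upt[OF P'] .
  have "lam (ks_step eps xs i) = lam (map (st2 L i) [1..<n+1])" unfolding ks using lam_filter[OF so] .
  also have "\<dots> = st2 L i" using lam_map_upt_eq[of "st2 L i" n] part_L0[OF P'] part_zero[OF P'] by simp
  finally show ?thesis unfolding ks L_def[symmetric] n_def[symmetric]
    using so sorted_wrt_filter length_filter_le[of _ "map (st2 L i) [1..<n+1]"]
    by (auto simp del: upt_Suc)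
qed




lemma cl_nth: "(\<forall>j. j + 1 < length cs \<longrightarrow> cs ! (j+1) = cs ! j + 2) \<Longrightarrow> k < length cs \<Longrightarrow> cs ! k = cs ! 0 + 2 * k"
  by (induction k) auto

lemma dd_shift: "1 \<le> h \<Longrightarrow> int (L (h - 1)) - int (L h) = dd L (h - 1)"
  unfolding dd_def by simp

lemma cluster_props:
  assumes p: "\<forall>x\<in>set xs. 0 < x" and T: "two_cluster eps xs cs"
  shows "2 \<le> length cs \<and> hd cs = cs ! 0 \<and> last cs = cs ! 0 + 2 * (length cs - 1) \<and>
         chain eps (lam xs) (cs ! 0) (last cs) \<and> DD eps (lam xs) (last cs - 2) \<and>
         (\<forall>k < length cs. cs ! k = cs ! 0 + 2 * k)"
proof -
  have l: "2 \<le> length cs" and st: "\<forall>j<length cs. (cs ! j, cs ! j + 1) \<in> two_steps eps xs"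
    and sp: "\<forall>j. j + 1 < length cs \<longrightarrow> cs ! (j+1) = cs ! j + 2"
    using T unfolding two_cluster_def by auto
  have nth: "\<forall>k < length cs. cs ! k = cs ! 0 + 2 * k" using cl_nth[OF sp] by blast
  have D: "\<forall>k < length cs. DD eps (lam xs) (cs ! k)" using st two_steps_iff[OF p] by auto
  have hd: "hd cs = cs ! 0" using l by (cases cs) auto
  have last: "last cs = cs ! (length cs - 1)" using l by (subst last_conv_nth) auto
  then have last2: "last cs = cs ! 0 + 2 * (length cs - 1)" using nth l by simp
  have ch: "chain eps (lam xs) (cs ! 0) (last cs)"
    unfolding chain_def
  proof (intro conjI allI impI)
    show "cs ! 0 \<le> last cs" "even (last cs - cs ! 0)" using last2 by auto
  next
    fix c assume c: "cs ! 0 \<le> c \<and> c \<le> last cs \<and> even (last cs - c)"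
    have e1: "even (last cs - cs ! 0)" using last2 by simp
    have "c - cs ! 0 = (last cs - cs ! 0) - (last cs - c)" using c by arith
    then have "even (c - cs ! 0)" using e1 c dvd_diff_nat by metis
    then obtain k where k: "c - cs ! 0 = 2 * k" by (elim evenE)
    then have "c = cs ! 0 + 2 * k" using c by linarith
    moreover have "k < length cs" using c last2 \<open>c = cs ! 0 + 2 * k\<close> l by linarith
    ultimately show "DD eps (lam xs) c" using D nth by metis
  qed
  have "last cs - 2 = cs ! (length cs - 2)" using nth last2 l by (simp add: algebra_simps)
  then have "DD eps (lam xs) (last cs - 2)" using D l by simp
  then show ?thesis using l hd last2 ch nth by blast
qed

lemma bad_boundary_iff: "cs \<noteq> [] \<Longrightarrow> 1 \<le> hd cs \<Longrightarrow>
  bad_boundary xs cs \<longleftrightarrow> (hd cs > 1 \<and> pos_even (dd (lam xs) (hd cs - 1))) \<or> pos_even (dd (lam xs) (last cs + 1))"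
  unfolding bad_boundary_def by (simp add: dd_shift dd_def)

lemma good_cluster_last:
  assumes s: "sorted_wrt (\<ge>) xs" and p: "\<forall>x\<in>set xs. 0 < x" and G: "cs \<in> good_clusters eps xs"
  shows "gg eps (lam xs) (last cs) \<and> 2 < last cs \<and> DD eps (lam xs) (last cs - 2) \<and> last cs \<le> length xs"
proof -
  define L where "L = lam xs"
  have P: "part L (length xs)" using part_lam[OF s] unfolding L_def .
  have T: "two_cluster eps xs cs" and nb: "\<not> bad_boundary xs cs" using G unfolding good_clusters_def by auto
  note cp = cluster_props[OF p T]
  define b where "b = cs ! 0"
  have l2: "2 \<le> length cs" using cp by blast
  have ch: "chain eps L b (last cs)" using cp unfolding b_def L_def by blast
  have lastb: "last cs = b + 2 * (length cs - 1)" using cp unfolding b_def by blast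
  have Dm2: "DD eps L (last cs - 2)" using cp unfolding L_def by blast
  have Db: "DD eps L b" and Dl: "DD eps L (last cs)" using chain_DD[OF ch] by auto
  have b1: "1 \<le> b" using DD_ge1[OF Db] .
  have ne: "cs \<noteq> []" using l2 by auto
  have hd: "hd cs = b" using cp unfolding b_def by blast
  have bb: "bad_boundary xs cs = ((b > 1 \<and> pos_even (dd L (b - 1))) \<or> pos_even (dd L (last cs + 1)))"
    using bad_boundary_iff[OF ne, of xs] hd b1 unfolding L_def by simp
  have nb2: "\<not> (b > 1 \<and> pos_even (dd L (b - 1)))" "\<not> pos_even (dd L (last cs + 1))"
    using nb bb by simp_all
  have "b = 1 \<or> (2 \<le> b \<and> odd (dd L (b-1)))"
  proof (cases "b = 1")
    case False
    then have "2 \<le> b" using b1 by simp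
    then show ?thesis using nb2(1) DD_left_pos[OF P Db] unfolding pos_even_def by simp
  qed simp
  then have "lok eps L (last cs)" using chain_to_lok[OF ch] by simp
  moreover have "odd (dd L (last cs + 1))" using nb2(2) DD_right_pos[OF P Dl] unfolding pos_even_def by simp
  moreover have "2 < last cs" using lastb b1 l2 by simp
  moreover have "last cs \<le> length xs" using DD_le_M[OF P Dl] by simp
  ultimately show ?thesis using Dm2 unfolding gg_def L_def by blast
qed

lemma good_cluster_inj:
  assumes s: "sorted_wrt (\<ge>) xs" and p: "\<forall>x\<in>set xs. 0 < x"
  shows "inj_on last (good_clusters eps xs)"
proof (rule inj_onI)
  define L where "L = lam xs"
  have P: "part L (length xs)" using part_lam[OF s] unfolding L_def .
  have key: "cs1 ! 0 \<le> cs2 ! 0"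
    if G1: "cs1 \<in> good_clusters eps xs" and G2: "cs2 \<in> good_clusters eps xs" and eq: "last cs1 = last cs2"
    for cs1 cs2
  proof (rule ccontr)
    assume "\<not> cs1 ! 0 \<le> cs2 ! 0"
    then have lt: "cs2 ! 0 < cs1 ! 0" by simp
    have T1: "two_cluster eps xs cs1" and nb1: "\<not> bad_boundary xs cs1"
      and T2: "two_cluster eps xs cs2" using G1 G2 unfolding good_clusters_def by auto
    note cp1 = cluster_props[OF p T1] and cp2 = cluster_props[OF p T2]
    define b1 where "b1 = cs1 ! 0"
    define b2 where "b2 = cs2 ! 0"
    define a where "a = last cs1"
    have ch1: "chain eps L b1 a" using cp1 unfolding b1_def a_def L_def by blast
    have "chain eps L b2 (last cs2)" using cp2 unfolding b2_def L_def by blast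
    then have ch2: "chain eps L b2 a" using eq unfolding a_def by simp
    have "b2 \<le> b1" "b1 \<le> a" "even (a - b1)" "even (a - b2)" using ch1 ch2 lt unfolding chain_def b1_def b2_def by auto
    have "b1 - b2 = (a - b2) - (a - b1)" using \<open>b2 \<le> b1\<close> \<open>b1 \<le> a\<close> by arith
    then have "even (b1 - b2)" using dvd_diff_nat[OF \<open>even (a - b2)\<close> \<open>even (a - b1)\<close>] by simp
    then have b22: "b2 + 2 \<le> b1" using even_gap_nat[of b2 b1] lt unfolding b1_def b2_def by auto
    have "a - (b1 - 2) = (a - b1) + 2" using b22 \<open>b1 \<le> a\<close> by arith
    then have "even (a - (b1 - 2))" using \<open>even (a - b1)\<close> by simp
    then have c1: "b2 \<le> b1 - 2 \<and> b1 - 2 \<le> a \<and> even (a - (b1 - 2))" using b22 \<open>b1 \<le> a\<close> by (simp, arith)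
    have H: "\<forall>c. b2 \<le> c \<and> c \<le> a \<and> even (a - c) \<longrightarrow> DD eps L c" using ch2 unfolding chain_def by blast
    have Dm: "DD eps L (b1 - 2)" using H c1 by blast
    have Db1: "DD eps L b1" using chain_DD[OF ch1] by simp
    have "b1 - 2 + 2 = b1" "b1 - 2 + 1 = b1 - 1" using b22 by auto
    then have ev: "even (dd L (b1 - 1))" using even_gap[OF Dm] Db1 by simp
    have pos: "0 < dd L (b1 - 1)" using DD_left_pos[OF P Db1] b22 by simp
    have "2 \<le> length cs1" using cp1 by blast
    then have ne: "cs1 \<noteq> []" by auto
    have hd: "hd cs1 = b1" using cp1 unfolding b1_def by blast
    have "hd cs1 > 1 \<and> pos_even (dd (lam xs) (hd cs1 - 1))" using hd b22 ev pos
      unfolding pos_even_def L_def by simp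
    then have "bad_boundary xs cs1" using bad_boundary_iff[OF ne, of xs] b22 hd by simp
    then show False using nb1 by simp
  qed
  fix cs1 cs2 assume G1: "cs1 \<in> good_clusters eps xs" and G2: "cs2 \<in> good_clusters eps xs"
    and eq: "last cs1 = last cs2"
  have "cs1 ! 0 = cs2 ! 0" using key[OF G1 G2 eq] key[OF G2 G1 eq[symmetric]] by simp
  have T1: "two_cluster eps xs cs1" and T2: "two_cluster eps xs cs2" using G1 G2 unfolding good_clusters_def by auto
  note cp1 = cluster_props[OF p T1] and cp2 = cluster_props[OF p T2]
  have l1: "last cs1 = cs1 ! 0 + 2 * (length cs1 - 1)" "2 \<le> length cs1" using cp1 by blast+
  have l2: "last cs2 = cs2 ! 0 + 2 * (length cs2 - 1)" "2 \<le> length cs2" using cp2 by blast+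
  have n1: "\<forall>k < length cs1. cs1 ! k = cs1 ! 0 + 2 * k" using cp1 by blast
  have n2: "\<forall>k < length cs2. cs2 ! k = cs2 ! 0 + 2 * k" using cp2 by blast
  have len: "length cs1 = length cs2" using l1 l2 eq \<open>cs1 ! 0 = cs2 ! 0\<close> by simp
  show "cs1 = cs2"
  proof (rule nth_equalityI)
    show "length cs1 = length cs2" by (rule len)
    fix k assume "k < length cs1"
    then show "cs1 ! k = cs2 ! k" using n1 n2 len \<open>cs1 ! 0 = cs2 ! 0\<close> by simp
  qed
qed

lemma good_cluster_surj:
  assumes s: "sorted_wrt (\<ge>) xs" and p: "\<forall>x\<in>set xs. 0 < x"
    and G: "gg eps (lam xs) a" and a2: "2 < a" and D2: "DD eps (lam xs) (a - 2)"
  shows "\<exists>cs \<in> good_clusters eps xs. last cs = a"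
proof -
  define L where "L = lam xs"
  have lk: "lok eps L a" and od: "odd (dd L (a+1))" using G unfolding gg_def L_def by auto
  obtain b where ch: "chain eps L b a" and st: "b = 1 \<or> (2 \<le> b \<and> odd (dd L (b-1)))"
    using chain_lok_start[OF lk] by blast
  have ba: "b \<le> a" and ev: "even (a - b)" and H: "\<forall>c. b \<le> c \<and> c \<le> a \<and> even (a - c) \<longrightarrow> DD eps L c"
    using ch unfolding chain_def by blast+
  have Da: "DD eps L a" using chain_DD[OF ch] by simp
  have "a - 2 + 2 = a" "a - 2 + 1 = a - 1" using a2 by auto
  then have eva: "even (dd L (a - 1))" using even_gap[of eps L "a-2"] D2 Da unfolding L_def by simp
  have "b \<noteq> a" using st eva a2 by auto
  obtain m where m: "a - b = 2 * m" using ev by (elim evenE)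
  have m1: "1 \<le> m" using m \<open>b \<noteq> a\<close> ba by (cases m) auto
  have am: "a = b + 2 * m" using m ba by arith
  define cs where "cs = map (\<lambda>k. b + 2 * k) [0..<m+1]"
  have lcs: "length cs = m + 1" unfolding cs_def by simp
  have nth: "\<And>k. k < m + 1 \<Longrightarrow> cs ! k = b + 2 * k" unfolding cs_def by (simp del: upt_Suc)
  have Dk: "DD eps L (b + 2 * k)" if "k < m + 1" for k
  proof -
    have "a - (b + 2 * k) = 2 * (m - k)" using am that by simp
    then have "even (a - (b + 2 * k))" by simp
    moreover have "b \<le> b + 2 * k" "b + 2 * k \<le> a" using am that by auto
    ultimately show ?thesis using H by blast
  qed
  have T: "two_cluster eps xs cs"
    unfolding two_cluster_def
  proof (intro conjI allI impI)
    show "2 \<le> length cs" using lcs m1 by simp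
  next
    fix j assume "j < length cs"
    then show "(cs ! j, cs ! j + 1) \<in> two_steps eps xs"
      using two_steps_iff[OF p, of eps] Dk[of j] nth[of j] lcs unfolding L_def by auto
  next
    fix j assume "j + 1 < length cs"
    then show "cs ! (j + 1) = cs ! j + 2" using nth[of j] nth[of "j+1"] lcs by simp
  qed
  have ne: "cs \<noteq> []" using lcs by auto
  have hd: "hd cs = b" using nth[of 0] ne by (simp add: hd_conv_nth)
  have last: "last cs = a" using nth[of m] lcs am ne by (simp add: last_conv_nth)
  have b1: "1 \<le> b" using DD_ge1[OF Dk[of 0]] by simp
  have "\<not> (hd cs > 1 \<and> pos_even (dd L (hd cs - 1)))" using hd st unfolding pos_even_def by auto
  moreover have "\<not> pos_even (dd L (last cs + 1))" using last od unfolding pos_even_def by auto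
  ultimately have "\<not> bad_boundary xs cs" using bad_boundary_iff[OF ne, of xs] hd b1 unfolding L_def by auto
  then show ?thesis using T last unfolding good_clusters_def by blast
qed

lemma z_fun_eq: assumes s: "sorted_wrt (\<ge>) xs" and p: "\<forall>x\<in>set xs. 0 < x"
  shows "z_fun eps xs = zz eps (lam xs) (length xs)"
proof -
  define L where "L = lam xs"
  define n where "n = length xs"
  have P: "part L n" using part_lam[OF s] unfolding L_def n_def .
  define A where "A = {i. DD eps L i}"
  define B where "B = {i \<in> A. (i > 1 \<and> even (dd L (i-1))) \<or> even (dd L (i+1))}"
  define G where "G = {a \<in> {1..n}. gg eps L a}"
  define G1 where "G1 = {a \<in> G. \<not> (2 < a \<and> DD eps L (a - 2))}"
  define G2 where "G2 = {a \<in> G. 2 < a \<and> DD eps L (a - 2)}"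
  have Afin: "finite A" unfolding A_def
    by (rule finite_subset[of _ "{1..n}"]) (use DD_le_M[OF P] DD_ge1 in fastforce, simp)
  have BA: "B \<subseteq> A" unfolding B_def by auto
  have inj: "inj (\<lambda>i::nat. (i, i+1))" by (auto simp: inj_def)
  have TS: "two_steps eps xs = (\<lambda>i. (i, i+1)) ` A" using two_steps_iff[OF p] unfolding A_def L_def by simp
  have BAD: "bad_two_steps eps xs = (\<lambda>i. (i, i+1)) ` B"
  proof -
    have "bad_two_steps eps xs = {(i, j) \<in> (\<lambda>i. (i, i+1)) ` A.
      (i > 1 \<and> even (int (lam xs (i-1)) - int (lam xs i))) \<or> even (int (lam xs (i+1)) - int (lam xs (i+2)))}"
      unfolding bad_two_steps_def TS ..
    also have "\<dots> = (\<lambda>i. (i, i+1)) ` B"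
      unfolding B_def A_def L_def using DD_ge1 dd_shift[of _ "lam xs"]
      by (auto simp: image_def dd_def)
    finally show ?thesis .
  qed
  have cTS: "card (two_steps eps xs) = card A" unfolding TS by (rule card_image) (use inj in \<open>auto simp: inj_on_def\<close>)
  have cB: "card (bad_two_steps eps xs) = card B" unfolding BAD by (rule card_image) (use inj in \<open>auto simp: inj_on_def\<close>)
  have cAB: "int (card A) - int (card B) = int (card (A - B))"
    using card_Diff_subset[OF finite_subset[OF BA Afin] BA] card_mono[OF Afin BA] by simp
  have AB: "A - B = G1"
  proof (rule set_eqI)
    fix a
    show "a \<in> A - B \<longleftrightarrow> a \<in> G1"
    proof
      assume a: "a \<in> A - B"
      then have Da: "DD eps L a" and c1: "\<not> (a > 1 \<and> even (dd L (a-1)))" and c2: "odd (dd L (a+1))"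
        unfolding A_def B_def by auto
      have a1: "1 \<le> a" using DD_ge1[OF Da] .
      have "lok eps L a" using lok_unfold[OF a1, of eps L] Da c1 a1 by auto
      moreover have "a \<le> n" using DD_le_M[OF P Da] by simp
      moreover have "\<not> (2 < a \<and> DD eps L (a - 2))"
      proof
        assume h: "2 < a \<and> DD eps L (a - 2)"
        have "a - 2 + 2 = a" "a - 2 + 1 = a - 1" using h by auto
        then have "even (dd L (a-1))" using even_gap[of eps L "a-2"] h Da by simp
        then show False using c1 h by simp
      qed
      ultimately show "a \<in> G1" unfolding G1_def G_def gg_def using a1 c2 by simp
    next
      assume a: "a \<in> G1"
      then have g: "gg eps L a" and n2: "\<not> (2 < a \<and> DD eps L (a - 2))" unfolding G1_def G_def by auto
      have Da: "DD eps L a" using gg_DD[OF g] .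
      have a1: "1 \<le> a" using DD_ge1[OF Da] .
      have lk: "lok eps L a" and od: "odd (dd L (a+1))" using g unfolding gg_def by auto
      have "a = 1 \<or> odd (dd L (a-1)) \<or> lok eps L (a-2)" using lok_unfold[OF a1, of eps L] lk by simp
      moreover have "\<not> lok eps L (a-2)"
      proof
        assume "lok eps L (a-2)"
        then have "DD eps L (a-2)" by (rule lok_DD)
        moreover have "2 < a" using DD_ge1[OF \<open>DD eps L (a-2)\<close>] by simp
        ultimately show False using n2 by simp
      qed
      ultimately have "\<not> (a > 1 \<and> even (dd L (a-1)))" by auto
      then show "a \<in> A - B" unfolding A_def B_def using Da od by auto
    qed
  qed
  have cl: "card (good_clusters eps xs) = card G2"
  proof (rule bij_betw_same_card[of last])
    show "bij_betw last (good_clusters eps xs) G2"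
      unfolding bij_betw_def
    proof
      show "inj_on last (good_clusters eps xs)" using good_cluster_inj[OF s p] .
      show "last ` good_clusters eps xs = G2"
      proof
        show "last ` good_clusters eps xs \<subseteq> G2"
        proof
          fix a assume "a \<in> last ` good_clusters eps xs"
          then obtain cs where cs: "cs \<in> good_clusters eps xs" "a = last cs" by blast
          from good_cluster_last[OF s p cs(1)] cs(2) show "a \<in> G2"
            unfolding G2_def G_def L_def n_def by auto
        qed
      next
        show "G2 \<subseteq> last ` good_clusters eps xs"
        proof
          fix a assume "a \<in> G2"
          then have "gg eps (lam xs) a" "2 < a" "DD eps (lam xs) (a - 2)" unfolding G2_def G_def L_def by auto
          from good_cluster_surj[OF s p this] show "a \<in> last ` good_clusters eps xs" by force
        qed
      qed
    qed
  qed
  have Gfin: "finite G" unfolding G_def by simp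
  have cG: "card G = card G1 + card G2"
  proof -
    have "G = G1 \<union> G2" "G1 \<inter> G2 = {}" unfolding G1_def G2_def by auto
    moreover have "finite G1" "finite G2" using Gfin unfolding G1_def G2_def by auto
    ultimately show ?thesis by (simp add: card_Un_disjoint)
  qed
  have sG: "(\<Sum>a=1..n. if gg eps L a then 1 else 0::int) = int (card G)"
    unfolding G_def by (rule sum_ind_card) simp
  show ?thesis
    unfolding z_fun_def zz_def s_fun_def
    using cTS cB cAB AB cl cG sG unfolding L_def n_def dd_def by simp
qed

lemma step_z1: assumes s: "sorted_wrt (\<ge>) xs" and p: "\<forall>x\<in>set xs. 0 < x" and C: "case1 xs i"
  shows "z_fun eps (ks_step eps xs i) = zz eps (st1 (lam xs) i) (length xs)"
proof -
  note K = ks_step1[OF s p C, of eps]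
  have P': "part (st1 (lam xs) i) (length (ks_step eps xs i))"
    using part_lam[of "ks_step eps xs i"] K by simp
  have "z_fun eps (ks_step eps xs i) = zz eps (st1 (lam xs) i) (length (ks_step eps xs i))"
    using z_fun_eq[of "ks_step eps xs i" eps] K by simp
  also have "\<dots> = zz eps (st1 (lam xs) i) (length xs)" using zz_mono_M[OF P', of "length xs" eps] K by simp
  finally show ?thesis .
qed

lemma step_z2: assumes s: "sorted_wrt (\<ge>) xs" and p: "\<forall>x\<in>set xs. 0 < x" and C: "case2 eps xs i"
  and N: "\<not> case1 xs i"
  shows "z_fun eps (ks_step eps xs i) = zz eps (st2 (lam xs) i) (length xs)"
proof -
  note K = ks_step2[OF s p C N]
  have P': "part (st2 (lam xs) i) (length (ks_step eps xs i))"
    using part_lam[of "ks_step eps xs i"] K by simp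
  have "z_fun eps (ks_step eps xs i) = zz eps (st2 (lam xs) i) (length (ks_step eps xs i))"
    using z_fun_eq[of "ks_step eps xs i" eps] K by simp
  also have "\<dots> = zz eps (st2 (lam xs) i) (length xs)" using zz_mono_M[OF P', of "length xs" eps] K by simp
  finally show ?thesis .
qed

lemma upper_bound: "sorted_wrt (\<ge>) xs \<Longrightarrow> (\<forall>x\<in>set xs. 0 < x) \<Longrightarrow> admissible eps xs is \<Longrightarrow>
   int (length is) \<le> z_fun eps xs"
proof (induction "is" arbitrary: xs)
  case Nil
  then show ?case using z_fun_eq[OF Nil(1,2)] zz_nonneg[OF part_lam[OF Nil(1)]] by simp
next
  case (Cons i "is")
  have s: "sorted_wrt (\<ge>) xs" and p: "\<forall>x\<in>set xs. 0 < x" using Cons.prems by auto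
  have C: "case1 xs i \<or> case2 eps xs i" and A: "admissible eps (ks_step eps xs i) is" using Cons.prems by auto
  have P: "part (lam xs) (length xs)" using part_lam[OF s] .
  show ?case
  proof (cases "case1 xs i")
    case True
    note K = ks_step1[OF s p True, of eps]
    have "int (length is) \<le> z_fun eps (ks_step eps xs i)" using Cons.IH[of "ks_step eps xs i"] A K by simp
    also have "\<dots> = zz eps (st1 (lam xs) i) (length xs)" using step_z1[OF s p True] .
    also have "\<dots> \<le> zz eps (lam xs) (length xs) - 1" using zz_st1_le[OF P, of i eps] True case1_iff[of xs i] by simp
    finally show ?thesis using z_fun_eq[OF s p] by simp
  next
    case False
    with C have C2: "case2 eps xs i" by simp
    note K = ks_step2[OF s p C2 False]
    have "int (length is) \<le> z_fun eps (ks_step eps xs i)" using Cons.IH[of "ks_step eps xs i"] A K by simp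
    also have "\<dots> = zz eps (st2 (lam xs) i) (length xs)" using step_z2[OF s p C2 False] .
    also have "\<dots> \<le> zz eps (lam xs) (length xs) - 1" using zz_st2_le[OF P, of eps i] C2 case2_iff[OF p, of eps i] by simp
    finally show ?thesis using z_fun_eq[OF s p] by simp
  qed
qed

lemma lower_bound: "\<forall>xs. sorted_wrt (\<ge>) xs \<and> (\<forall>x\<in>set xs. 0 < x) \<and> z_fun eps xs = int k \<longrightarrow>
   (\<exists>is. admissible eps xs is \<and> length is = k)"
proof (induction k)
  case 0
  then show ?case by (intro allI impI exI[of _ "[]"]) simp
next
  case (Suc k)
  show ?case
  proof (intro allI impI)
    fix xs assume h: "sorted_wrt (\<ge>) xs \<and> (\<forall>x\<in>set xs. 0 < x) \<and> z_fun eps xs = int (Suc k)"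
    then have s: "sorted_wrt (\<ge>) xs" and p: "\<forall>x\<in>set xs. 0 < x" and z: "z_fun eps xs = int (Suc k)" by auto
    have P: "part (lam xs) (length xs)" using part_lam[OF s] .
    have zz: "zz eps (lam xs) (length xs) = int (Suc k)" using z z_fun_eq[OF s p] by simp
    then have "0 < zz eps (lam xs) (length xs)" by simp
    from zz_step_exists[OF P this] obtain i where
      I: "(c1 (lam xs) i \<and> zz eps (st1 (lam xs) i) (length xs) + 1 = zz eps (lam xs) (length xs)) \<or>
          (c2 eps (lam xs) i \<and> \<not> c1 (lam xs) i \<and> zz eps (st2 (lam xs) i) (length xs) + 1 = zz eps (lam xs) (length xs))"
      by blast
    then show "\<exists>is. admissible eps xs is \<and> length is = Suc k"
    proof
      assume a: "c1 (lam xs) i \<and> zz eps (st1 (lam xs) i) (length xs) + 1 = zz eps (lam xs) (length xs)"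
      then have C: "case1 xs i" using case1_iff by blast
      note K = ks_step1[OF s p C, of eps]
      have "z_fun eps (ks_step eps xs i) = int k" using step_z1[OF s p C] a zz by simp
      then obtain js where "admissible eps (ks_step eps xs i) js" "length js = k"
        using Suc.IH[rule_format, of "ks_step eps xs i"] K by blast
      then show ?thesis using C by (intro exI[of _ "i # js"]) simp
    next
      assume a: "c2 eps (lam xs) i \<and> \<not> c1 (lam xs) i \<and> zz eps (st2 (lam xs) i) (length xs) + 1 = zz eps (lam xs) (length xs)"
      then have C: "case2 eps xs i" and N: "\<not> case1 xs i" using case1_iff case2_iff[OF p] by blast+
      note K = ks_step2[OF s p C N]
      have "z_fun eps (ks_step eps xs i) = int k" using step_z2[OF s p C N] a zz by simp
      then obtain js where "admissible eps (ks_step eps xs i) js" "length js = k"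
        using Suc.IH[rule_format, of "ks_step eps xs i"] K by blast
      then show ?thesis using C by (intro exI[of _ "i # js"]) simp
    qed
  qed
qed

theorem mainTheorem10:
  fixes eps :: int and N :: nat and xs :: "nat list"
  assumes "eps = 1 \<or> eps = -1"
    and "xs \<in> P_eps eps N"
  shows "(\<exists>is. admissible eps xs is \<and> int (length is) = z_fun eps xs) \<and>
         (\<forall>is. admissible eps xs is \<longrightarrow> int (length is) \<le> z_fun eps xs)"
proof
  have s: "sorted_wrt (\<ge>) xs" and p: "\<forall>x\<in>set xs. 0 < x" using assms(2) unfolding P_eps_def by auto
  have nn: "0 \<le> z_fun eps xs" using z_fun_eq[OF s p] zz_nonneg[OF part_lam[OF s]] by simp
  then obtain k where k: "z_fun eps xs = int k" using nonneg_int_cases by blast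
  then obtain js where "admissible eps xs js" "length js = k" using lower_bound[of eps k] s p by blast
  then show "\<exists>is. admissible eps xs is \<and> int (length is) = z_fun eps xs" using k by auto
  show "\<forall>is. admissible eps xs is \<longrightarrow> int (length is) \<le> z_fun eps xs" using upper_bound[OF s p] by blast
qed


end
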